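(* Let $g,\psi$ be nonconstant entire functions and $0<p<\infty$. Then (i) $M_{(g,\psi)}\in L^\infty(\mathbb{C},dA)$ if and only if $B_{(|g|^p,\psi)}\in L^\infty(\mathbb{C},dA)$; (ii) $\widetilde M_{(g,\psi)}\in L^\infty(\mathbb{C},dA)$ if and only if $\widetilde B_{(|g|^p,\psi)}\in L^\infty(\mathbb{C},dA)$.
   Context: $dA$ is Lebesgue area measure on $\mathbb{C}$; $k_w(z)=e^{\overline wz-\frac12|w|^2}$. $M_{(g,\psi)}(z)=\frac{|g'(z)|}{1+|z|}e^{\frac12(|\psi(z)|^2-|z|^2)}$, $\widetilde M_{(g,\psi)}(z)=\frac{|g(z)|(1+|\psi(z)|)}{1+|z|}e^{\frac12(|\psi(z)|^2-|z|^2)}$, $B_{(|g|^p,\psi)}(w)=\int_{\mathbb{C}}|k_w(\psi(z))|^p\frac{|g'(z)|^pe^{-\frac p2|z|^2}}{(1+|z|)^p}\,dA(z)$, $\widetilde B_{(|g|^p,\psi)}(w)=\int_{\mathbb{C}}|k_w(\psi(z))|^p\frac{(1+|w|)^p|g(z)|^pe^{-\frac p2|z|^2}}{(1+|z|)^p}\,dA(z)$. *)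

theory Defs
  imports "HOL-Analysis.Analysis"
begin

text \<open>Normalized reproducing kernel of the Fock space: k_w(z) = exp(conj(w) z - |w|^2/2).\<close>
definition kw :: "complex \<Rightarrow> complex \<Rightarrow> complex" where
  "kw w z = exp (cnj w * z - of_real (cmod w ^ 2 / 2))"

definition M_fun :: "(complex \<Rightarrow> complex) \<Rightarrow> (complex \<Rightarrow> complex) \<Rightarrow> complex \<Rightarrow> real" where
  "M_fun g \<psi> z = cmod (deriv g z) / (1 + cmod z) * exp ((cmod (\<psi> z) ^ 2 - cmod z ^ 2) / 2)"

definition Mt_fun :: "(complex \<Rightarrow> complex) \<Rightarrow> (complex \<Rightarrow> complex) \<Rightarrow> complex \<Rightarrow> real" where
  "Mt_fun g \<psi> z = cmod (g z) * (1 + cmod (\<psi> z)) / (1 + cmod z) * exp ((cmod (\<psi> z) ^ 2 - cmod z ^ 2) / 2)"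

text \<open>The Berezin-type transforms; integrals of nonnegative functions, hence ennreal-valued.\<close>
definition B_fun :: "real \<Rightarrow> (complex \<Rightarrow> complex) \<Rightarrow> (complex \<Rightarrow> complex) \<Rightarrow> complex \<Rightarrow> ennreal" where
  "B_fun p g \<psi> w = (\<integral>\<^sup>+ z. ennreal (cmod (kw w (\<psi> z)) powr p * cmod (deriv g z) powr p
      * exp (- (p / 2) * cmod z ^ 2) / (1 + cmod z) powr p) \<partial>lebesgue)"

definition Bt_fun :: "real \<Rightarrow> (complex \<Rightarrow> complex) \<Rightarrow> (complex \<Rightarrow> complex) \<Rightarrow> complex \<Rightarrow> ennreal" where
  "Bt_fun p g \<psi> w = (\<integral>\<^sup>+ z. ennreal (cmod (kw w (\<psi> z)) powr p * (1 + cmod w) powr p * cmod (g z) powr p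
      * exp (- (p / 2) * cmod z ^ 2) / (1 + cmod z) powr p) \<partial>lebesgue)"

definition Linf_real :: "(complex \<Rightarrow> real) \<Rightarrow> bool" where
  "Linf_real f \<longleftrightarrow> f \<in> borel_measurable lebesgue \<and> (\<exists>C::real. AE z in lebesgue. \<bar>f z\<bar> \<le> C)"

definition Linf_ennreal :: "(complex \<Rightarrow> ennreal) \<Rightarrow> bool" where
  "Linf_ennreal f \<longleftrightarrow> f \<in> borel_measurable lebesgue \<and> (\<exists>C::real. AE z in lebesgue. f z \<le> ennreal C)"

end

theory Submission
  imports Defs "HOL-Complex_Analysis.Complex_Analysis" "HOL-Probability.Distributions"
begin

lemma mean_value_holo:
  fixes r R :: real
  assumes holf: "f holomorphic_on ball z R" and r: "0 < r" "r < R"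
  shows "((\<lambda>t. f (z + r * exp(2 * of_real pi * \<i> * of_real t))) has_integral f z) {0..1}"
proof -
  have sub: "cball z r \<subseteq> ball z R" using r by auto
  have contf: "continuous_on (cball z r) f"
    using holf sub holomorphic_on_imp_continuous_on holomorphic_on_subset by blast
  have holr: "f holomorphic_on ball z r"
    using holf holomorphic_on_subset r by fastforce
  have "((\<lambda>u. f u/(u-z)) has_contour_integral (2 * of_real pi * \<i> * f z)) (circlepath z r)"
    using Cauchy_integral_circlepath[OF contf holr] r by simp
  hence "((\<lambda>x. f (circlepath z r x) / (circlepath z r x - z) * vector_derivative (circlepath z r) (at x within {0..1}))
     has_integral (2 * of_real pi * \<i> * f z)) {0..1}"
    by (simp add: has_contour_integral_def)
  hence "((\<lambda>x. (2 * of_real pi * \<i>) * f (z + r * exp(2 * of_real pi * \<i> * of_real x)))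
     has_integral (2 * of_real pi * \<i>) * f z) {0..1}"
  proof (rule has_integral_eq[rotated])
    fix x :: real assume x: "x \<in> {0..1}"
    have ne: "exp(2 * of_real pi * \<i> * of_real x) \<noteq> 0" by simp
    show "f (circlepath z r x) / (circlepath z r x - z) * vector_derivative (circlepath z r) (at x within {0..1})
       = (2 * of_real pi * \<i>) * f (z + r * exp(2 * of_real pi * \<i> * of_real x))"
    proof -
      have vd: "vector_derivative (circlepath z r) (at x within {0..1}) = 2 * pi * \<i> * r * exp(2 * of_real pi * \<i> * x)"
        using x by (intro vector_derivative_circlepath01) auto
      show ?thesis unfolding vd
      using x r ne by (simp add: circlepath field_simps)
    qed
  qed
  hence "((\<lambda>x. inverse (2 * of_real pi * \<i>) * ((2 * of_real pi * \<i>) * f (z + r * exp(2 * of_real pi * \<i> * of_real x))))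
     has_integral inverse (2 * of_real pi * \<i>) * ((2 * of_real pi * \<i>) * f z)) {0..1}"
    by (rule has_integral_mult_right)
  hence "((\<lambda>x. (inverse (2 * of_real pi * \<i>) * (2 * of_real pi * \<i>)) * f (z + r * exp(2 * of_real pi * \<i> * of_real x)))
     has_integral (inverse (2 * of_real pi * \<i>) * (2 * of_real pi * \<i>)) * f z) {0..1}"
    by (simp only: mult.assoc)
  moreover have c: "inverse (2 * of_real pi * \<i>) * (2 * of_real pi * \<i>) = (1::complex)" by (intro left_inverse) simp
  ultimately show ?thesis by (simp only: c mult_1_left)
qed

abbreviation ee :: "real \<Rightarrow> complex" where "ee t \<equiv> exp (2 * of_real pi * \<i> * of_real t)"

lemma norm_ee [simp]: "cmod (ee t) = 1"
  by (simp add: norm_exp_eq_Re)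

lemma cnj_ee_mult: "cnj (ee t) * ee t = 1"
proof -
  have "ee t * cnj (ee t) = 1"
    using complex_norm_square[of "ee t"] by simp
  thus ?thesis by (metis mult.commute)
qed

lemma jensen_base:
  fixes r R :: real
  assumes holu: "u holomorphic_on ball z0 R" and r: "0 < r" "r < R"
    and nz: "\<And>z. z \<in> ball z0 R \<Longrightarrow> u z \<noteq> 0"
  shows "((\<lambda>t. ln (cmod (u (z0 + r * ee t)))) has_integral ln (cmod (u z0))) {0..1}"
proof -
  have "contractible (ball z0 R)" by (simp add: convex_imp_contractible)
  then obtain L where holL: "L holomorphic_on ball z0 R" and uL: "\<And>z. z \<in> ball z0 R \<Longrightarrow> u z = exp (L z)"
    using contractible_imp_holomorphic_log[OF holu _ nz] by metis
  have "((\<lambda>t. L (z0 + r * ee t)) has_integral L z0) {0..1}"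
    by (rule mean_value_holo[OF holL r])
  hence "((Re \<circ> (\<lambda>t. L (z0 + r * ee t))) has_integral Re (L z0)) {0..1}"
    by (rule has_integral_linear) (rule bounded_linear_Re)
  moreover have "z0 + r * ee t \<in> ball z0 R" for t
    using r by (auto simp: dist_norm norm_mult)
  moreover have "z0 \<in> ball z0 R" using r by simp
  ultimately show ?thesis
    by (simp add: uL norm_exp_eq_Re o_def)
qed

lemma finite_zeros_cball:
  assumes "u holomorphic_on UNIV" "u z0 \<noteq> 0"
  shows "finite {z \<in> cball c r. u z = 0}"
proof (cases "u constant_on UNIV")
  case True
  then obtain k where "\<And>z. u z = k" by (auto simp: constant_on_def)
  with assms have "{z \<in> cball c r. u z = 0} = {}" by auto
  thus ?thesis by (metis finite.emptyI)
next
  case False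
  show ?thesis
    by (rule holomorphic_compact_finite_zeros[OF assms(1) open_UNIV connected_UNIV compact_cball _ False]) simp
qed

lemma jensen:
  fixes r :: real
  assumes holu: "u holomorphic_on UNIV" and u0: "u z0 \<noteq> 0" and r: "0 < r"
    and nzs: "\<And>z. z \<in> sphere z0 r \<Longrightarrow> u z \<noteq> 0"
  shows "(\<lambda>t. ln (cmod (u (z0 + r * ee t)))) integrable_on {0..1} \<and>
         ln (cmod (u z0)) \<le> integral {0..1} (\<lambda>t. ln (cmod (u (z0 + r * ee t))))"
proof -
  have "\<forall>u. u holomorphic_on UNIV \<longrightarrow> u z0 \<noteq> 0 \<longrightarrow> (\<forall>z\<in>sphere z0 r. u z \<noteq> 0) \<longrightarrow>
     card {z \<in> cball z0 r. u z = 0} = n \<longrightarrow>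
     (\<lambda>t. ln (cmod (u (z0 + r * ee t)))) integrable_on {0..1} \<and>
         ln (cmod (u z0)) \<le> integral {0..1} (\<lambda>t. ln (cmod (u (z0 + r * ee t))))" for n
  proof (induction n)
    case 0
    show ?case
    proof (intro allI impI)
      fix u assume holu: "u holomorphic_on UNIV" and u0: "u z0 \<noteq> 0" and nzs: "\<forall>z\<in>sphere z0 r. u z \<noteq> 0"
        and c: "card {z \<in> cball z0 r. u z = 0} = 0"
      have fin: "finite {z \<in> cball z0 r. u z = 0}" using finite_zeros_cball[OF holu u0] .
      hence noz: "\<And>z. z \<in> cball z0 r \<Longrightarrow> u z \<noteq> 0" using c by auto
      define Z where "Z = {z \<in> cball z0 (r+1). u z = 0}"
      have finZ: "finite Z" unfolding Z_def using finite_zeros_cball[OF holu u0] .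
      define R where "R = Min (insert (r+1) ((\<lambda>z. dist z0 z) ` Z))"
      have "r < dist z0 z" if "z \<in> Z" for z using that noz[of z] by (force simp: Z_def)
      hence Rgt: "r < R" unfolding R_def
        using finZ r by auto
      have Rle: "R \<le> r + 1" unfolding R_def using finZ by simp
      have "u z \<noteq> 0" if "z \<in> ball z0 R" for z
      proof
        assume uz: "u z = 0"
        have "dist z0 z < r + 1" using that Rle by simp
        hence "z \<in> Z" using uz by (simp add: Z_def)
        hence "R \<le> dist z0 z" unfolding R_def using finZ by simp
        thus False using that by simp
      qed
      then have "((\<lambda>t. ln (cmod (u (z0 + r * ee t)))) has_integral ln (cmod (u z0))) {0..1}"
        by (intro jensen_base[of u z0 R r] holomorphic_on_subset[OF holu]) (use r Rgt in auto)
      thus "(\<lambda>t. ln (cmod (u (z0 + r * ee t)))) integrable_on {0..1} \<and>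
         ln (cmod (u z0)) \<le> integral {0..1} (\<lambda>t. ln (cmod (u (z0 + r * ee t))))"
        by (simp add: has_integral_iff)
    qed
  next
    case (Suc n)
    show ?case
    proof (intro allI impI)
      fix u assume holu: "u holomorphic_on UNIV" and u0: "u z0 \<noteq> 0" and nzs: "\<forall>z\<in>sphere z0 r. u z \<noteq> 0"
        and c: "card {z \<in> cball z0 r. u z = 0} = Suc n"
      let ?Z = "{z \<in> cball z0 r. u z = 0}"
      have fin: "finite ?Z" using finite_zeros_cball[OF holu u0] .
      obtain a where aZ: "a \<in> ?Z" using c by (metis card.empty ex_in_conv nat.distinct(1))
      have ua: "u a = 0" and ada: "dist z0 a \<le> r" using aZ by auto
      have "a \<notin> sphere z0 r" using nzs ua by auto
      hence dlt: "dist z0 a < r" using ada by auto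
      have nconst: "\<not> u constant_on UNIV" using u0 ua by (metis constant_on_def iso_tuple_UNIV_I)
      obtain g r1 m where m: "0 < m" and r1: "0 < r1" and holg: "g holomorphic_on ball a r1"
          and ug: "\<And>w. w \<in> ball a r1 \<Longrightarrow> u w = (w - a)^m * g w"
          and gnz: "\<And>w. w \<in> ball a r1 \<Longrightarrow> g w \<noteq> 0"
        using holomorphic_factor_zero_nonconstant[OF holu open_UNIV connected_UNIV UNIV_I ua nconst] by metis
      define v where "v w = (if w = a then g a else u w / (w - a)^m)" for w
      have holv: "v holomorphic_on UNIV"
      proof -
        have "v holomorphic_on (UNIV - {a})"
        proof -
          have "(\<lambda>w. u w / (w - a)^m) holomorphic_on (UNIV - {a})"
            by (intro holomorphic_intros holomorphic_on_subset[OF holu]) auto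
          thus ?thesis by (rule holomorphic_transform) (simp add: v_def)
        qed
        moreover have "v holomorphic_on ball a r1"
        proof (rule holomorphic_transform[OF holg])
          fix w assume w: "w \<in> ball a r1"
          show "g w = v w"
          proof (cases "w = a")
            case True thus ?thesis by (simp add: v_def)
          next
            case False
            thus ?thesis using ug[OF w] by (simp add: v_def)
          qed
        qed
        moreover have "UNIV = (UNIV - {a}) \<union> ball a r1" using r1 by auto
        ultimately show ?thesis by (metis holomorphic_on_Un open_ball open_delete open_UNIV)
      qed
      have uv: "u w = (w - a)^m * v w" for w
        by (cases "w = a") (use m in \<open>auto simp: v_def ua\<close>)
      have va: "v a \<noteq> 0" using gnz r1 by (simp add: v_def)
      define B where "B w = of_real (r^2) - cnj (a - z0) * (w - z0)" for w
      define u' where "u' w = v w * B w ^ m" for w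
      have holu': "u' holomorphic_on UNIV" unfolding u'_def B_def by (intro holomorphic_intros holv)
      have na: "cmod (a - z0) < r" using dlt by (simp add: dist_norm norm_minus_commute)
      have Bnz: "B w \<noteq> 0" if "w \<in> cball z0 r" for w
      proof
        assume "B w = 0"
        hence "cnj (a - z0) * (w - z0) = of_real (r^2)" by (simp add: B_def)
        hence "cmod (cnj (a - z0) * (w - z0)) = r^2" using r by (simp add: norm_power)
        hence e: "cmod (a - z0) * cmod (w - z0) = r^2" by (simp add: norm_mult del: complex_cnj_diff)
        have "cmod (w - z0) \<le> r" using that by (simp add: dist_norm norm_minus_commute)
        hence "cmod (a - z0) * cmod (w - z0) \<le> cmod (a - z0) * r" by (simp add: mult_left_mono)
        also have "\<dots> < r * r" using na r by (simp add: mult_strict_right_mono)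
        finally show False using e by (simp add: power2_eq_square)
      qed
      have vz0: "v z0 \<noteq> 0" using u0 uv[of z0] by auto
      have u'0: "u' z0 \<noteq> 0" using vz0 r by (simp add: u'_def B_def)
      have zer: "{z \<in> cball z0 r. u' z = 0} = ?Z - {a}"
      proof (intro set_eqI iffI)
        fix z assume z: "z \<in> {z \<in> cball z0 r. u' z = 0}"
        hence "v z = 0" using Bnz[of z] by (auto simp: u'_def)
        moreover have "z \<noteq> a" using va \<open>v z = 0\<close> by auto
        ultimately show "z \<in> ?Z - {a}" using z uv[of z] by auto
      next
        fix z assume z: "z \<in> ?Z - {a}"
        hence "v z = 0" using uv[of z] by auto
        thus "z \<in> {z \<in> cball z0 r. u' z = 0}" using z by (auto simp: u'_def)
      qed
      have card': "card {z \<in> cball z0 r. u' z = 0} = n" using zer c fin aZ by simp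
      have nzs': "\<forall>z\<in>sphere z0 r. u' z \<noteq> 0"
      proof
        fix z assume z: "z \<in> sphere z0 r"
        show "u' z \<noteq> 0"
        proof
          assume "u' z = 0"
          hence "z \<in> ?Z - {a}" using zer z by auto
          thus False using nzs z by auto
        qed
      qed
      from Suc.IH[rule_format, OF holu' u'0 _ card'] nzs' have
         int': "(\<lambda>t. ln (cmod (u' (z0 + r * ee t)))) integrable_on {0..1}" and
         le': "ln (cmod (u' z0)) \<le> integral {0..1} (\<lambda>t. ln (cmod (u' (z0 + r * ee t))))" by blast+
      have sph: "ln (cmod (u (z0 + r * ee t))) = ln (cmod (u' (z0 + r * ee t))) - m * ln r" for t
      proof -
        let ?w = "z0 + r * ee t"
        have wsph: "?w \<in> sphere z0 r" using r by (simp add: dist_norm norm_mult)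
        hence uw: "u ?w \<noteq> 0" using nzs by auto
        have wa: "?w \<noteq> a" using uw ua by auto
        have vw: "v ?w \<noteq> 0" using uw uv[of ?w] by auto
        have "B ?w = cnj (r * ee t - (a - z0)) * (r * ee t)"
        proof -
          have "cnj (r * ee t - (a - z0)) * (r * ee t) = of_real r * of_real r * (cnj (ee t) * ee t) - cnj (a - z0) * (r * ee t)"
            by (simp add: algebra_simps)
          also have "\<dots> = of_real (r^2) - cnj (a - z0) * (r * ee t)"
            by (simp add: cnj_ee_mult power2_eq_square)
          finally show ?thesis by (simp add: B_def)
        qed
        hence "cmod (B ?w) = cmod (cnj (r * ee t - (a - z0))) * cmod (of_real r * ee t)"
          by (simp only: norm_mult)
        also have "\<dots> = cmod (?w - a) * r"
        proof -
          have "r * ee t - (a - z0) = ?w - a" by (simp add: algebra_simps)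
          thus ?thesis using r by (simp only: complex_mod_cnj norm_mult norm_ee) simp
        qed
        finally have nB: "cmod (B ?w) = r * cmod (?w - a)" by simp
        have "cmod (u' ?w) = cmod (v ?w) * (r * cmod (?w - a))^m"
          by (simp add: u'_def norm_mult norm_power nB)
        hence l1: "ln (cmod (u' ?w)) = ln (cmod (v ?w)) + m * ln r + m * ln (cmod (?w - a))"
          using r vw wa by (simp add: ln_mult ln_realpow algebra_simps)
        have "cmod (u ?w) = cmod (?w - a)^m * cmod (v ?w)"
          by (simp add: uv[of ?w] norm_mult norm_power)
        hence l2: "ln (cmod (u ?w)) = m * ln (cmod (?w - a)) + ln (cmod (v ?w))"
          using r vw wa by (simp add: ln_mult ln_realpow)
        show ?thesis using l1 l2 by simp
      qed
      have "(\<lambda>t. ln (cmod (u' (z0 + r * ee t))) - m * ln r) integrable_on {0..1}"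
        by (intro integrable_diff int' integrable_const_ivl)
      hence int: "(\<lambda>t. ln (cmod (u (z0 + r * ee t)))) integrable_on {0..1}"
        by (simp add: sph)
      have ieq: "integral {0..1} (\<lambda>t. ln (cmod (u (z0 + r * ee t)))) =
          integral {0..1} (\<lambda>t. ln (cmod (u' (z0 + r * ee t)))) - m * ln r"
        by (simp add: sph integral_diff int' integrable_const_ivl)
      have c0: "ln (cmod (u z0)) \<le> ln (cmod (u' z0)) - m * ln r"
      proof -
        have az: "z0 - a \<noteq> 0" using u0 ua by auto
        have "ln (cmod (u z0)) = m * ln (cmod (z0 - a)) + ln (cmod (v z0))"
          using az vz0 by (simp add: uv[of z0] norm_mult norm_power ln_mult ln_realpow)
        also have "\<dots> \<le> m * ln r + ln (cmod (v z0))"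
        proof -
          have "ln (cmod (z0 - a)) \<le> ln r" using na az r by (simp add: norm_minus_commute)
          thus ?thesis by (simp add: mult_left_mono)
        qed
        also have "\<dots> = ln (cmod (u' z0)) - m * ln r"
          using r vz0 by (simp add: u'_def B_def norm_mult norm_power ln_mult ln_realpow)
        finally show ?thesis .
      qed
      show "(\<lambda>t. ln (cmod (u (z0 + r * ee t)))) integrable_on {0..1} \<and>
         ln (cmod (u z0)) \<le> integral {0..1} (\<lambda>t. ln (cmod (u (z0 + r * ee t))))"
        using int ieq c0 le' by simp
    qed
  qed
  thus ?thesis using assms by blast
qed

lemma cont_circle_powr:
  fixes r p :: real
  assumes holh: "h holomorphic_on UNIV" and p: "0 < p"
  shows "continuous_on {0..1} (\<lambda>t. cmod (h (z0 + r * ee t)) powr p)"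
proof -
  have ch: "continuous_on UNIV h" using holh holomorphic_on_imp_continuous_on by blast
  have "continuous_on {0..1} (\<lambda>t. h (z0 + r * ee t))"
    by (rule continuous_on_compose2[OF ch]) (auto intro!: continuous_intros)
  thus ?thesis using p by (intro continuous_on_powr' continuous_intros) auto
qed

lemma submean_circle:
  fixes r p :: real
  assumes holh: "h holomorphic_on UNIV" and p: "0 < p" and r: "0 < r"
    and nzs: "\<And>z. z \<in> sphere z0 r \<Longrightarrow> h z \<noteq> 0"
  shows "cmod (h z0) powr p \<le> integral {0..1} (\<lambda>t. cmod (h (z0 + r * ee t)) powr p)"
proof -
  let ?F = "\<lambda>t. cmod (h (z0 + r * ee t)) powr p"
  have intF: "?F integrable_on {0..1}"
    by (rule integrable_continuous_interval[OF cont_circle_powr[OF holh p]])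
  show ?thesis
  proof (cases "h z0 = 0")
    case True
    thus ?thesis using p by (simp add: integral_nonneg intF)
  next
    case False
    let ?y = "\<lambda>t. ln (cmod (h (z0 + r * ee t)))"
    from jensen[OF holh False r nzs] have inty: "?y integrable_on {0..1}"
      and le: "ln (cmod (h z0)) \<le> integral {0..1} ?y" by blast+
    define m where "m = integral {0..1} ?y"
    have hy: "(?y has_integral m) {0..1}" using inty by (simp add: m_def has_integral_integral)
    have Fy: "?F t = exp (p * ?y t)" for t
    proof -
      have "z0 + r * ee t \<in> sphere z0 r" using r by (simp add: dist_norm norm_mult)
      hence "h (z0 + r * ee t) \<noteq> 0" using nzs by blast
      thus ?thesis by (simp add: powr_def mult.commute)
    qed
    have h1: "((\<lambda>t. exp (p * m) * (1 + p * ?y t - p * m)) has_integral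
          exp (p * m) * (1 + p * m - p * m)) {0..1}"
    proof -
      have "((\<lambda>t. p * ?y t) has_integral p * m) {0..1}"
        using has_integral_mult_right[OF hy] by simp
      hence "((\<lambda>t. (1 - p * m) + p * ?y t) has_integral (1 - p * m) + p * m) {0..1}"
        using has_integral_add[OF has_integral_const_real[of "1 - p * m" 0 1], of "\<lambda>t. p * ?y t" "p * m"] by simp
      hence "((\<lambda>t. exp (p * m) * ((1 - p * m) + p * ?y t)) has_integral exp (p * m) * ((1 - p * m) + p * m)) {0..1}"
        by (rule has_integral_mult_right)
      thus ?thesis by (simp add: algebra_simps)
    qed
    have h2: "((\<lambda>t. ?F t) has_integral integral {0..1} ?F) {0..1}"
      using intF by (simp add: has_integral_integral)
    have h3: "exp (p * m) * (1 + p * ?y t - p * m) \<le> ?F t" for t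
    proof -
      have "1 + (p * ?y t - p * m) \<le> exp (p * ?y t - p * m)" by (rule exp_ge_add_one_self)
      hence "exp (p * m) * (1 + (p * ?y t - p * m)) \<le> exp (p * m) * exp (p * ?y t - p * m)"
        by (simp add: mult_left_mono)
      also have "\<dots> = exp (p * ?y t)" by (simp add: exp_add[symmetric])
      finally show ?thesis unfolding Fy by (simp only: add_diff_eq)
    qed
    have "exp (p * m) * (1 + p * m - p * m) \<le> integral {0..1} ?F"
      by (rule has_integral_le[OF h1 h2 h3])
    hence "exp (p * m) \<le> integral {0..1} ?F" by simp
    moreover have "cmod (h z0) powr p \<le> exp (p * m)"
      using False le p by (simp add: powr_def m_def mult.commute)
    ultimately show ?thesis by linarith
  qed
qed

lemma good_radius:
  assumes holu: "u holomorphic_on UNIV" and u1: "u z1 \<noteq> 0"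
  shows "\<exists>r. R \<le> r \<and> 0 < r \<and> (\<forall>z\<in>sphere z1 r. u z \<noteq> 0)"
proof -
  define R' where "R' = max R 1"
  define Z where "Z = {z \<in> cball z1 (R'+1). u z = 0}"
  have "finite Z" unfolding Z_def by (rule finite_zeros_cball[OF holu u1])
  hence fD: "finite (dist z1 ` Z)" by simp
  have "infinite {R'..R'+1}" by simp
  hence "infinite ({R'..R'+1} - dist z1 ` Z)" using fD by (simp add: Diff_infinite_finite)
  then obtain r where r: "r \<in> {R'..R'+1} - dist z1 ` Z" using infinite_imp_nonempty by blast
  have "\<forall>z\<in>sphere z1 r. u z \<noteq> 0"
  proof (intro ballI notI)
    fix z assume z: "z \<in> sphere z1 r" and uz: "u z = 0"
    hence "z \<in> Z" using r by (simp add: Z_def)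
    moreover have "r = dist z1 z" using z by simp
    ultimately have "r \<in> dist z1 ` Z" by blast
    thus False using r by simp
  qed
  moreover have "R \<le> r" "0 < r" using r by (auto simp: R'_def)
  ultimately show ?thesis by blast
qed

lemma cauchy_coeff_integral:
  fixes r :: real
  assumes holp: "\<psi> holomorphic_on UNIV" and r: "0 < r"
  shows "((\<lambda>t. (2 * of_real pi * \<i>) * (\<psi> (z1 + r * ee t) / (r * ee t)^k)) has_integral
          ((of_real (2 * pi) * \<i>) / fact k * (deriv ^^ k) \<psi> z1)) {0..1}"
proof -
  have contf: "continuous_on (cball z1 r) \<psi>"
    using holp holomorphic_on_imp_continuous_on holomorphic_on_subset by blast
  have holf: "\<psi> holomorphic_on ball z1 r" using holp holomorphic_on_subset by blast
  have "((\<lambda>u. \<psi> u / (u - z1)^(Suc k)) has_contour_integral ((2 * pi * \<i>) / (fact k) * (deriv ^^ k) \<psi> z1)) (circlepath z1 r)"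
    by (rule Cauchy_has_contour_integral_higher_derivative_circlepath[OF contf holf]) (use r in simp)
  hence "((\<lambda>x. \<psi> (circlepath z1 r x) / (circlepath z1 r x - z1)^(Suc k) * vector_derivative (circlepath z1 r) (at x within {0..1}))
     has_integral ((2 * pi * \<i>) / (fact k) * (deriv ^^ k) \<psi> z1)) {0..1}"
    by (simp add: has_contour_integral_def)
  thus ?thesis
  proof (rule has_integral_eq[rotated])
    fix x :: real assume x: "x \<in> {0..1}"
    have ne: "ee x \<noteq> 0" by simp
    have vd: "vector_derivative (circlepath z1 r) (at x within {0..1}) = 2 * pi * \<i> * r * ee x"
      using x by (intro vector_derivative_circlepath01) auto
    show "\<psi> (circlepath z1 r x) / (circlepath z1 r x - z1)^(Suc k) * vector_derivative (circlepath z1 r) (at x within {0..1})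
       = (2 * of_real pi * \<i>) * (\<psi> (z1 + r * ee x) / (r * ee x)^k)"
      unfolding vd using r ne by (simp add: circlepath field_simps)
  qed
qed

lemma coeff_bound:
  fixes r :: real
  assumes holp: "\<psi> holomorphic_on UNIV" and r: "0 < r"
  shows "cmod ((deriv ^^ k) \<psi> z1 / fact k) \<le> integral {0..1} (\<lambda>t. cmod (\<psi> (z1 + r * ee t))) / r^k"
proof -
  let ?f = "\<lambda>t. (2 * of_real pi * \<i>) * (\<psi> (z1 + r * ee t) / (r * ee t)^k)"
  let ?D = "(of_real (2 * pi) * \<i>) / fact k * (deriv ^^ k) \<psi> z1"
  have hf: "(?f has_integral ?D) {0..1}" by (rule cauchy_coeff_integral[OF holp r])
  have cont_psi: "continuous_on UNIV \<psi>" using holp holomorphic_on_imp_continuous_on by blast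
  have cg: "continuous_on {0..1} (\<lambda>t. \<psi> (z1 + r * ee t))"
    by (rule continuous_on_compose2[OF cont_psi]) (auto intro!: continuous_intros)
  have int1: "(\<lambda>t. 2 * pi * cmod (\<psi> (z1 + r * ee t)) / r^k) integrable_on {0..1}"
    by (intro integrable_continuous_interval continuous_intros cg) (use r in auto)
  have "norm (integral {0..1} ?f) \<le> integral {0..1} (\<lambda>t. 2 * pi * cmod (\<psi> (z1 + r * ee t)) / r^k)"
  proof (rule integral_norm_bound_integral)
    show "?f integrable_on {0..1}" using hf by blast
    show "(\<lambda>t. 2 * pi * cmod (\<psi> (z1 + r * ee t)) / r^k) integrable_on {0..1}" by (rule int1)
    fix t :: real
    show "norm (?f t) \<le> 2 * pi * cmod (\<psi> (z1 + r * ee t)) / r^k"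
      using r by (simp add: norm_mult norm_divide norm_power)
  qed
  also have "\<dots> = 2 * pi / r^k * integral {0..1} (\<lambda>t. cmod (\<psi> (z1 + r * ee t)))"
  proof -
    have "integral {0..1} (\<lambda>t. (2 * pi / r^k) * cmod (\<psi> (z1 + r * ee t))) =
          2 * pi / r^k * integral {0..1} (\<lambda>t. cmod (\<psi> (z1 + r * ee t)))"
      by (rule integral_mult_right)
    thus ?thesis by (simp add: field_simps)
  qed
  finally have "norm ?D \<le> 2 * pi / r^k * integral {0..1} (\<lambda>t. cmod (\<psi> (z1 + r * ee t)))"
    using hf by (simp add: integral_unique)
  hence "2 * pi * cmod ((deriv ^^ k) \<psi> z1 / fact k) \<le> 2 * pi * (integral {0..1} (\<lambda>t. cmod (\<psi> (z1 + r * ee t))) / r^k)"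
    by (simp add: norm_mult norm_divide field_simps)
  thus ?thesis by (simp only: mult_le_cancel_left_pos pi_gt_zero zero_less_mult_iff zero_less_numeral simp_thms)
qed

lemma aux_lin1:
  fixes l z z2 R R2 P lC :: real
  shows "l \<le> z \<Longrightarrow> z2 \<le> R2 \<Longrightarrow> z \<le> R \<Longrightarrow> lC + l - (P - z2)/2 \<le> lC + R + R2/2 + -1/2 * P"
  by (simp add: field_simps)

lemma aux_lin2:
  fixes a b lC R R2 I :: real
  shows "a \<le> b \<Longrightarrow> b \<le> lC + R + R2/2 + -1/2 * I \<Longrightarrow> I \<le> R2 + 2 * R + (2 * lC - 2 * a)"
  by (simp add: field_simps)

lemma mean_sq_bound:
  fixes r C :: real
  assumes holu: "u holomorphic_on UNIV" and u1: "u z1 \<noteq> 0" and holp: "\<psi> holomorphic_on UNIV" and C: "0 < C"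
    and bound: "\<And>z. cmod (u z) * exp ((cmod (\<psi> z)^2 - cmod z^2)/2) \<le> C * (1 + cmod z)"
    and r: "0 < r" and good: "\<forall>z\<in>sphere z1 r. u z \<noteq> 0"
  shows "integral {0..1} (\<lambda>t. cmod (\<psi> (z1 + r * ee t))^2)
     \<le> (r + cmod z1)^2 + 2 * (r + cmod z1) + (2 * ln C - 2 * ln (cmod (u z1)))"
proof -
  let ?g = "\<lambda>t. z1 + r * ee t"
  let ?c = "cmod z1"
  let ?P2 = "\<lambda>t. cmod (\<psi> (?g t))^2"
  have gs: "?g t \<in> sphere z1 r" for t using r by (simp add: dist_norm norm_mult)
  have ng: "cmod (?g t) \<le> r + ?c" for t
  proof -
    have "cmod (?g t) \<le> cmod z1 + cmod (of_real r * ee t)" by (rule norm_triangle_ineq)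
    thus ?thesis using r by (simp add: norm_mult)
  qed
  have cont_psi: "continuous_on UNIV \<psi>" using holp holomorphic_on_imp_continuous_on by blast
  have cg: "continuous_on {0..1} (\<lambda>t. \<psi> (?g t))"
    by (rule continuous_on_compose2[OF cont_psi]) (auto intro!: continuous_intros)
  have int2: "?P2 integrable_on {0..1}"
    by (intro integrable_continuous_interval continuous_intros cg)
  from jensen[OF holu u1 r] good have intl: "(\<lambda>t. ln (cmod (u (?g t)))) integrable_on {0..1}"
     and jl: "ln (cmod (u z1)) \<le> integral {0..1} (\<lambda>t. ln (cmod (u (?g t))))" by auto
  define L where "L = ln C + (r + ?c) + (r + ?c)^2/2"
  have pw: "ln (cmod (u (?g t))) \<le> L + (-1/2) * ?P2 t" for t
  proof -
    let ?z = "?g t"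
    have uz: "u ?z \<noteq> 0" using good gs by blast
    have ep: "0 < exp ((cmod (\<psi> ?z)^2 - cmod ?z^2)/2)" by simp
    have "cmod (u ?z) \<le> C * (1 + cmod ?z) / exp ((cmod (\<psi> ?z)^2 - cmod ?z^2)/2)"
      using bound[of ?z] ep by (simp add: pos_le_divide_eq)
    hence "ln (cmod (u ?z)) \<le> ln (C * (1 + cmod ?z) / exp ((cmod (\<psi> ?z)^2 - cmod ?z^2)/2))"
      using uz C by (subst ln_le_cancel_iff) (auto intro!: divide_pos_pos mult_pos_pos add_pos_nonneg)
    also have "\<dots> = ln C + ln (1 + cmod ?z) - (cmod (\<psi> ?z)^2 - cmod ?z^2)/2"
    proof -
      have p1: "0 < 1 + cmod ?z" by (simp add: add_pos_nonneg)
      show ?thesis using C p1 by (simp add: ln_div ln_mult)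
    qed
    also have "\<dots> \<le> L + (-1/2) * ?P2 t"
    proof -
      have "ln (1 + cmod ?z) \<le> cmod ?z" by (rule ln_add_one_self_le_self) simp
      moreover have "cmod ?z^2 \<le> (r + ?c)^2" using ng[of t] by (intro power_mono) auto
      ultimately show ?thesis using ng[of t] unfolding L_def by (rule aux_lin1)
    qed
    finally show ?thesis .
  qed
  have h2: "((\<lambda>t. L + (-1/2) * ?P2 t) has_integral L + (-1/2) * integral {0..1} ?P2) {0..1}"
  proof -
    have "((\<lambda>t. (-1/2) * ?P2 t) has_integral (-1/2) * integral {0..1} ?P2) {0..1}"
      by (intro has_integral_mult_right integrable_integral int2)
    moreover have hc: "((\<lambda>t::real. L) has_integral L) {0..1}" using has_integral_const_real[of L 0 1] by simp
    ultimately show ?thesis using has_integral_add by blast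
  qed
  have "integral {0..1} (\<lambda>t. ln (cmod (u (?g t)))) \<le> L + (-1/2) * integral {0..1} ?P2"
    by (rule has_integral_le[OF integrable_integral[OF intl] h2 pw])
  with jl show ?thesis unfolding L_def by (rule aux_lin2)
qed

lemma aux_amgm:
  fixes x r :: real
  assumes "0 < r"
  shows "x \<le> x^2 / (2 * r) + r / 2"
proof -
  have "0 \<le> (x - r)^2" by simp
  hence "2 * r * x \<le> x^2 + r^2" by (simp add: power2_eq_square algebra_simps)
  thus ?thesis using assms by (simp add: field_simps power2_eq_square)
qed

lemma div_ge1_le:
  fixes A r :: real
  assumes "0 \<le> A" "1 \<le> r"
  shows "A / r \<le> A"
  using assms mult_left_mono[of 1 r A] by (simp add: divide_le_eq)

lemma affine_of_growth:
  fixes C :: real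
  assumes holu: "u holomorphic_on UNIV" and u1: "u z1 \<noteq> 0" and holp: "\<psi> holomorphic_on UNIV" and C: "0 < C"
    and bound: "\<And>z. cmod (u z) * exp ((cmod (\<psi> z)^2 - cmod z^2)/2) \<le> C * (1 + cmod z)"
  shows "\<exists>a b. (\<forall>z. \<psi> z = a * z + b) \<and> cmod a \<le> 1"
proof -
  define c where "c = cmod z1"
  define K where "K = 2 * ln C - 2 * ln (cmod (u z1))"
  define A where "A = c + 1"
  define B where "B = abs (c^2 + 2*c + K) / 2"
  have A0: "0 \<le> A" and B0: "0 \<le> B" by (auto simp: A_def B_def c_def)
  have cont_psi: "continuous_on UNIV \<psi>" using holp holomorphic_on_imp_continuous_on by blast
  have key: "cmod ((deriv ^^ k) \<psi> z1 / fact k) \<le> (r + A + B / r) / r^k"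
    if r1: "1 \<le> r" and good: "\<forall>z\<in>sphere z1 r. u z \<noteq> 0" for r k
  proof -
    have r0: "0 < r" using r1 by simp
    let ?P1 = "\<lambda>t. cmod (\<psi> (z1 + r * ee t))"
    let ?P2 = "\<lambda>t. cmod (\<psi> (z1 + r * ee t))^2"
    have cg: "continuous_on {0..1} (\<lambda>t. \<psi> (z1 + r * ee t))"
      by (rule continuous_on_compose2[OF cont_psi]) (auto intro!: continuous_intros)
    have int1: "?P1 integrable_on {0..1}"
      by (intro integrable_continuous_interval continuous_intros cg)
    have int2: "?P2 integrable_on {0..1}"
      by (intro integrable_continuous_interval continuous_intros cg)
    have int2d: "(\<lambda>t. ?P2 t / (2 * r)) integrable_on {0..1}"
      by (intro integrable_continuous_interval continuous_intros cg) (use r0 in auto)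
    have I2: "integral {0..1} ?P2 \<le> (r + c)^2 + 2 * (r + c) + K"
      unfolding c_def K_def by (rule mean_sq_bound[OF holu u1 holp C bound r0 good])
    have "integral {0..1} ?P1 \<le> integral {0..1} (\<lambda>t. ?P2 t / (2 * r) + r / 2)"
      by (rule integral_le[OF int1]) (auto intro!: integrable_add int2d aux_amgm r0)
    also have "\<dots> = integral {0..1} (\<lambda>t. ?P2 t / (2 * r)) + integral {0..1} (\<lambda>t::real. r / 2)"
      by (rule integral_add[OF int2d integrable_const_ivl])
    also have "\<dots> = integral {0..1} ?P2 / (2 * r) + r / 2"
      by (simp only: integral_divide integral_const_real content_real_eq_0) simp
    also have "\<dots> \<le> ((r + c)^2 + 2 * (r + c) + K) / (2 * r) + r / 2"
      using I2 r0 by (simp add: divide_right_mono)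
    also have "\<dots> = r + A + (c^2 + 2*c + K) / (2 * r)"
      using r0 by (simp add: A_def field_simps power2_eq_square)
    also have "\<dots> \<le> r + A + B / r"
    proof -
      have "(c^2 + 2*c + K) / (2 * r) \<le> abs (c^2 + 2*c + K) / (2 * r)"
        using r0 by (simp add: divide_right_mono)
      thus ?thesis using r0 by (simp add: B_def)
    qed
    finally have "integral {0..1} ?P1 \<le> r + A + B / r" .
    hence "integral {0..1} ?P1 / r^k \<le> (r + A + B / r) / r^k"
      using r0 by (simp add: divide_right_mono)
    with coeff_bound[OF holp r0, of k z1] show ?thesis by linarith
  qed
  have good: "\<exists>r. R \<le> r \<and> 0 < r \<and> (\<forall>z\<in>sphere z1 r. u z \<noteq> 0)" for R
    using good_radius[OF holu u1] by blast
  have D2: "(deriv ^^ k) \<psi> z1 = 0" if k2: "2 \<le> k" for k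
  proof (rule ccontr)
    assume nz: "(deriv ^^ k) \<psi> z1 \<noteq> 0"
    define \<delta> where "\<delta> = cmod ((deriv ^^ k) \<psi> z1 / fact k)"
    have d0: "0 < \<delta>" using nz by (simp add: \<delta>_def)
    obtain r where r: "max 1 ((1 + A + B) / \<delta> + 1) \<le> r" "0 < r" "\<forall>z\<in>sphere z1 r. u z \<noteq> 0"
      using good by blast
    have r1: "1 \<le> r" using r by simp
    have "\<delta> \<le> (r + A + B / r) / r^k" using key[OF r1 r(3)] by (simp add: \<delta>_def)
    also have "\<dots> \<le> (r + A + B / r) / r^2"
    proof -
      have "r^2 \<le> r^k" using r1 k2 by (intro power_increasing) auto
      moreover have "0 \<le> r + A + B / r" using A0 B0 r1 by simp
      ultimately show ?thesis using r1 by (intro divide_left_mono) auto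
    qed
    also have "\<dots> \<le> (1 + A + B) / r"
    proof -
      have "(r + A + B / r) / r^2 = 1 / r + (A / r) / r + (B / r) / r^2"
        using r1 by (simp add: field_simps power2_eq_square)
      also have "\<dots> \<le> 1 / r + A / r + B / r"
      proof -
        have "(A / r) / r \<le> A / r" using A0 r1 by (intro div_ge1_le) auto
        moreover have "(B / r) / r^2 \<le> B / r"
        proof -
          have "1 \<le> r^2" using r1 by (simp add: one_le_power)
          thus ?thesis using B0 r1 by (intro div_ge1_le) auto
        qed
        ultimately show ?thesis by simp
      qed
      also have "\<dots> = (1 + A + B) / r" by (simp add: add_divide_distrib)
      finally show ?thesis .
    qed
    also have "\<dots> < \<delta>"
    proof -
      have "(1 + A + B) / \<delta> < r" using r by simp
      thus ?thesis using d0 r1 by (simp add: divide_less_eq mult.commute)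
    qed
    finally show False by simp
  qed
  have D1: "cmod (deriv \<psi> z1) \<le> 1"
  proof (rule ccontr)
    assume "\<not> cmod (deriv \<psi> z1) \<le> 1"
    define \<delta> where "\<delta> = cmod (deriv \<psi> z1) - 1"
    have d0: "0 < \<delta>" using \<open>\<not> cmod (deriv \<psi> z1) \<le> 1\<close> by (simp add: \<delta>_def)
    obtain r where r: "max 1 ((A + B) / \<delta> + 1) \<le> r" "0 < r" "\<forall>z\<in>sphere z1 r. u z \<noteq> 0"
      using good by blast
    have r1: "1 \<le> r" using r by simp
    have "cmod (deriv \<psi> z1) \<le> (r + A + B / r) / r" using key[OF r1 r(3), of 1] by simp
    also have "\<dots> = 1 + A / r + (B / r) / r" using r1 by (simp add: field_simps)
    also have "\<dots> \<le> 1 + (A + B) / r"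
    proof -
      have "(B / r) / r \<le> B / r" using B0 r1 by (intro div_ge1_le) auto
      thus ?thesis by (simp add: add_divide_distrib)
    qed
    also have "\<dots> < 1 + \<delta>"
    proof -
      have "(A + B) / \<delta> < r" using r by simp
      thus ?thesis using d0 r1 by (simp add: divide_less_eq mult.commute)
    qed
    finally show False by (simp add: \<delta>_def)
  qed
  have eq: "\<psi> w = \<psi> z1 + deriv \<psi> z1 * (w - z1)" for w
  proof -
    have "(\<lambda>n. (deriv ^^ n) \<psi> z1 / fact n * (w - z1)^n) sums \<psi> w"
      by (rule holomorphic_power_series[of \<psi> z1 "cmod (w - z1) + 1" w])
         (auto intro: holomorphic_on_subset[OF holp] simp: dist_norm norm_minus_commute)
    moreover have "(\<lambda>n. (deriv ^^ n) \<psi> z1 / fact n * (w - z1)^n) sums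
        (\<Sum>n\<in>{0,1}. (deriv ^^ n) \<psi> z1 / fact n * (w - z1)^n)"
    proof (rule sums_finite)
      fix n :: nat assume "n \<notin> {0,1}"
      hence "2 \<le> n" by auto
      thus "(deriv ^^ n) \<psi> z1 / fact n * (w - z1)^n = 0" using D2 by simp
    qed simp
    ultimately have "\<psi> w = (\<Sum>n\<in>{0,1}. (deriv ^^ n) \<psi> z1 / fact n * (w - z1)^n)"
      using sums_unique2 by blast
    thus ?thesis by simp
  qed
  show ?thesis
  proof (intro exI conjI allI)
    fix z show "\<psi> z = deriv \<psi> z1 * z + (\<psi> z1 - deriv \<psi> z1 * z1)"
      using eq[of z] by (simp add: algebra_simps)
  next
    show "cmod (deriv \<psi> z1) \<le> 1" by (rule D1)
  qed
qed

lemma sets_lborel_pair: "sets (lborel \<Otimes>\<^sub>M lborel :: ('a::euclidean_space \<times> 'b::euclidean_space) measure) = sets borel"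
  by (metis lborel_prod sets_lborel)

lemma meas_pair_lborel:
  "f \<in> borel_measurable (borel :: ('a::euclidean_space \<times> 'b::euclidean_space) measure) \<Longrightarrow>
   f \<in> borel_measurable (lborel \<Otimes>\<^sub>M lborel :: ('a \<times> 'b) measure)"
  using measurable_cong_sets[OF sets_lborel_pair refl] by blast

definition cJ :: "real \<times> real \<Rightarrow> complex" where "cJ p = Complex (fst p) (snd p)"

lemma cJ_cont: "continuous_on UNIV cJ"
  unfolding cJ_def Complex_eq by (intro continuous_intros)

lemma cJ_meas [measurable]: "cJ \<in> borel_measurable borel"
  by (rule borel_measurable_continuous_onI[OF cJ_cont])

lemma cplx_lborel: "distr (lborel :: (real \<times> real) measure) borel cJ = lborel"
proof (rule lborel_eqI[symmetric])
  fix l u :: complex assume le: "\<And>b. b \<in> Basis \<Longrightarrow> l \<bullet> b \<le> u \<bullet> b"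
  have le1: "Re l \<le> Re u" and le2: "Im l \<le> Im u" using le[of 1] le[of \<i>] by auto
  have pre: "cJ -` box l u = {Re l<..<Re u} \<times> {Im l<..<Im u}"
    by (auto simp: box_def Basis_complex_def cJ_def)
  have "emeasure (distr lborel borel cJ) (box l u) = emeasure (lborel :: (real \<times> real) measure) (cJ -` box l u)"
    by (subst emeasure_distr) auto
  also have "\<dots> = emeasure (lborel \<Otimes>\<^sub>M lborel) ({Re l<..<Re u} \<times> {Im l<..<Im u})"
    by (simp add: pre lborel_prod)
  also have "\<dots> = emeasure lborel {Re l<..<Re u} * emeasure lborel {Im l<..<Im u}"
    by (rule lborel.emeasure_pair_measure_Times) auto
  also have "\<dots> = ennreal ((Re u - Re l) * (Im u - Im l))"
    using le1 le2 by (simp add: ennreal_mult)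
  also have "\<dots> = (\<Prod>b\<in>Basis. (u - l) \<bullet> b)"
    by (simp add: Basis_complex_def)
  finally show "emeasure (distr lborel borel cJ) (box l u) = (\<Prod>b\<in>Basis. (u - l) \<bullet> b)" .
qed simp

lemma nn_integral_complex_iter:
  fixes f :: "complex \<Rightarrow> ennreal"
  assumes [measurable]: "f \<in> borel_measurable borel"
  shows "(\<integral>\<^sup>+z. f z \<partial>lborel) = (\<integral>\<^sup>+x. (\<integral>\<^sup>+y. f (Complex x y) \<partial>lborel) \<partial>lborel)"
    and "(\<integral>\<^sup>+z. f z \<partial>lborel) = (\<integral>\<^sup>+y. (\<integral>\<^sup>+x. f (Complex x y) \<partial>lborel) \<partial>lborel)"
proof -
  have m: "(\<lambda>p. f (cJ p)) \<in> borel_measurable (lborel \<Otimes>\<^sub>M lborel)"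
    by (intro meas_pair_lborel) measurable
  have "(\<integral>\<^sup>+z. f z \<partial>lborel) = (\<integral>\<^sup>+z. f z \<partial>(distr (lborel :: (real \<times> real) measure) borel cJ))"
    by (simp add: cplx_lborel)
  also have "\<dots> = (\<integral>\<^sup>+p. f (cJ p) \<partial>(lborel :: (real \<times> real) measure))"
    by (rule nn_integral_distr) auto
  also have "\<dots> = (\<integral>\<^sup>+p. f (cJ p) \<partial>(lborel \<Otimes>\<^sub>M lborel))"
    by (simp add: lborel_prod)
  finally have e: "(\<integral>\<^sup>+z. f z \<partial>lborel) = (\<integral>\<^sup>+p. f (cJ p) \<partial>(lborel \<Otimes>\<^sub>M lborel))" .
  show "(\<integral>\<^sup>+z. f z \<partial>lborel) = (\<integral>\<^sup>+x. (\<integral>\<^sup>+y. f (Complex x y) \<partial>lborel) \<partial>lborel)"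
    unfolding e lborel.nn_integral_fst[OF m, symmetric] by (simp add: cJ_def)
  show "(\<integral>\<^sup>+z. f z \<partial>lborel) = (\<integral>\<^sup>+y. (\<integral>\<^sup>+x. f (Complex x y) \<partial>lborel) \<partial>lborel)"
    unfolding e lborel_pair.nn_integral_snd[OF m, symmetric] by (simp add: cJ_def)
qed

lemma meas_comp_cont:
  fixes f :: "'b::topological_space \<Rightarrow> ennreal" and g :: "'a::topological_space \<Rightarrow> 'b"
  assumes "f \<in> borel_measurable borel" "continuous_on UNIV g"
  shows "(\<lambda>z. f (g z)) \<in> borel_measurable borel"
  using measurable_compose[OF borel_measurable_continuous_onI[OF assms(2)] assms(1)] by (simp add: o_def)

lemma shear_h:
  fixes f :: "complex \<Rightarrow> ennreal" and t :: real
  assumes mf: "f \<in> borel_measurable borel"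
  shows "(\<integral>\<^sup>+z. f (z + of_real (t * Im z)) \<partial>lborel) = (\<integral>\<^sup>+z. f z \<partial>lborel)"
proof -
  have m: "(\<lambda>z. f (z + of_real (t * Im z))) \<in> borel_measurable borel"
    by (rule meas_comp_cont[OF mf]) (intro continuous_intros)
  have mx: "(\<lambda>x. f (Complex x y)) \<in> borel_measurable borel" for y
    by (rule meas_comp_cont[OF mf]) (simp add: Complex_eq, intro continuous_intros)
  have "(\<integral>\<^sup>+z. f (z + of_real (t * Im z)) \<partial>lborel) = (\<integral>\<^sup>+y. (\<integral>\<^sup>+x. f (Complex x y + of_real (t * y)) \<partial>lborel) \<partial>lborel)"
    using nn_integral_complex_iter(2)[OF m] by simp
  also have "\<dots> = (\<integral>\<^sup>+y. (\<integral>\<^sup>+x. f (Complex x y) \<partial>lborel) \<partial>lborel)"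
  proof (rule nn_integral_cong)
    fix y :: real
    have "(\<integral>\<^sup>+x. f (Complex x y) \<partial>lborel) = ennreal \<bar>1\<bar> * (\<integral>\<^sup>+x. f (Complex (t * y + 1 * x) y) \<partial>lborel)"
      by (rule nn_integral_real_affine[OF mx]) simp
    also have "\<dots> = (\<integral>\<^sup>+x. f (Complex x y + of_real (t * y)) \<partial>lborel)"
      by (simp, intro nn_integral_cong arg_cong[where f=f]) (simp add: complex_eq_iff)
    finally show "(\<integral>\<^sup>+x. f (Complex x y + of_real (t * y)) \<partial>lborel) = (\<integral>\<^sup>+x. f (Complex x y) \<partial>lborel)" by simp
  qed
  also have "\<dots> = (\<integral>\<^sup>+z. f z \<partial>lborel)"
    using nn_integral_complex_iter(2)[OF mf] by simp
  finally show ?thesis .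
qed

lemma shear_v:
  fixes f :: "complex \<Rightarrow> ennreal" and t :: real
  assumes mf: "f \<in> borel_measurable borel"
  shows "(\<integral>\<^sup>+z. f (z + \<i> * of_real (t * Re z)) \<partial>lborel) = (\<integral>\<^sup>+z. f z \<partial>lborel)"
proof -
  have m: "(\<lambda>z. f (z + \<i> * of_real (t * Re z))) \<in> borel_measurable borel"
    by (rule meas_comp_cont[OF mf]) (intro continuous_intros)
  have my: "(\<lambda>y. f (Complex x y)) \<in> borel_measurable borel" for x
    by (rule meas_comp_cont[OF mf]) (simp add: Complex_eq, intro continuous_intros)
  have "(\<integral>\<^sup>+z. f (z + \<i> * of_real (t * Re z)) \<partial>lborel) = (\<integral>\<^sup>+x. (\<integral>\<^sup>+y. f (Complex x y + \<i> * of_real (t * x)) \<partial>lborel) \<partial>lborel)"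
    using nn_integral_complex_iter(1)[OF m] by simp
  also have "\<dots> = (\<integral>\<^sup>+x. (\<integral>\<^sup>+y. f (Complex x y) \<partial>lborel) \<partial>lborel)"
  proof (rule nn_integral_cong)
    fix x :: real
    have "(\<integral>\<^sup>+y. f (Complex x y) \<partial>lborel) = ennreal \<bar>1\<bar> * (\<integral>\<^sup>+y. f (Complex x (t * x + 1 * y)) \<partial>lborel)"
      by (rule nn_integral_real_affine[OF my]) simp
    also have "\<dots> = (\<integral>\<^sup>+y. f (Complex x y + \<i> * of_real (t * x)) \<partial>lborel)"
      by (simp, intro nn_integral_cong arg_cong[where f=f]) (simp add: complex_eq_iff)
    finally show "(\<integral>\<^sup>+y. f (Complex x y + \<i> * of_real (t * x)) \<partial>lborel) = (\<integral>\<^sup>+y. f (Complex x y) \<partial>lborel)" by simp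
  qed
  also have "\<dots> = (\<integral>\<^sup>+z. f z \<partial>lborel)"
    using nn_integral_complex_iter(1)[OF mf] by simp
  finally show ?thesis .
qed

lemma rot_invariant_aux:
  fixes f :: "complex \<Rightarrow> ennreal"
  assumes mf: "f \<in> borel_measurable borel" and c: "cmod c = 1" and c1: "Re c \<noteq> -1"
  shows "(\<integral>\<^sup>+z. f (c * z) \<partial>lborel) = (\<integral>\<^sup>+z. f z \<partial>lborel)"
proof -
  define \<alpha> where "\<alpha> = Re c"
  define \<beta> where "\<beta> = Im c"
  have ab: "\<alpha>^2 + \<beta>^2 = 1" using c unfolding \<alpha>_def \<beta>_def by (simp add: cmod_def)
  have a1: "1 + \<alpha> \<noteq> 0" using c1 by (simp add: \<alpha>_def)
  define \<tau> where "\<tau> = \<beta> / (1 + \<alpha>)"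
  define A where "A z = z + of_real ((- \<tau>) * Im z)" for z
  define Bv where "Bv z = z + \<i> * of_real (\<beta> * Re z)" for z
  have tb: "1 - \<tau> * \<beta> = \<alpha>"
  proof -
    have "\<tau> * \<beta> = \<beta>^2 / (1 + \<alpha>)" by (simp add: \<tau>_def power2_eq_square)
    also have "\<dots> = (1 - \<alpha>) * (1 + \<alpha>) / (1 + \<alpha>)" using ab by (simp add: algebra_simps power2_eq_square)
    also have "\<dots> = 1 - \<alpha>" using a1 by simp
    finally show ?thesis by simp
  qed
  have tb2: "\<tau> * (2 - \<tau> * \<beta>) = \<beta>"
  proof -
    have "\<tau> * (2 - \<tau> * \<beta>) = \<tau> * (1 + \<alpha>)" using tb by simp
    also have "\<dots> = \<beta>" using a1 by (simp add: \<tau>_def)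
    finally show ?thesis .
  qed
  have cz: "c * z = A (Bv (A z))" for z
  proof (rule complex_eqI)
    have "Re (A (Bv (A z))) = Re z * (1 - \<tau> * \<beta>) - Im z * (\<tau> * (2 - \<tau> * \<beta>))"
      by (simp add: A_def Bv_def algebra_simps)
    also have "\<dots> = \<alpha> * Re z - \<beta> * Im z" by (simp add: tb tb2)
    finally show "Re (c * z) = Re (A (Bv (A z)))" by (simp add: \<alpha>_def \<beta>_def)
    have "Im (A (Bv (A z))) = \<beta> * Re z + (1 - \<tau> * \<beta>) * Im z"
      by (simp add: A_def Bv_def algebra_simps)
    also have "\<dots> = \<beta> * Re z + \<alpha> * Im z" by (simp add: tb)
    finally show "Im (c * z) = Im (A (Bv (A z)))" by (simp add: \<alpha>_def \<beta>_def algebra_simps)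
  qed
  have cA: "continuous_on UNIV A" unfolding A_def by (intro continuous_intros)
  have cB: "continuous_on UNIV Bv" unfolding Bv_def by (intro continuous_intros)
  have cAB: "continuous_on UNIV (\<lambda>z. A (Bv z))" by (rule continuous_on_compose2[OF cA cB]) auto
  have m1: "(\<lambda>z. f (A (Bv z))) \<in> borel_measurable borel"
    by (rule meas_comp_cont[OF mf cAB])
  have m2: "(\<lambda>z. f (A z)) \<in> borel_measurable borel"
    by (rule meas_comp_cont[OF mf cA])
  have "(\<integral>\<^sup>+z. f (c * z) \<partial>lborel) = (\<integral>\<^sup>+z. f (A (Bv (A z))) \<partial>lborel)" by (simp add: cz)
  also have "\<dots> = (\<integral>\<^sup>+z. f (A (Bv z)) \<partial>lborel)"
    using shear_h[OF m1, of "- \<tau>"] by (simp add: A_def)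
  also have "\<dots> = (\<integral>\<^sup>+z. f (A z) \<partial>lborel)"
    using shear_v[OF m2, of \<beta>] by (simp add: Bv_def)
  also have "\<dots> = (\<integral>\<^sup>+z. f z \<partial>lborel)"
    using shear_h[OF mf, of "- \<tau>"] by (simp add: A_def)
  finally show ?thesis .
qed

lemma rot_invariant:
  fixes f :: "complex \<Rightarrow> ennreal"
  assumes mf: "f \<in> borel_measurable borel" and c: "cmod c = 1"
  shows "(\<integral>\<^sup>+z. f (c * z) \<partial>lborel) = (\<integral>\<^sup>+z. f z \<partial>lborel)"
proof (cases "Re c = -1")
  case False
  thus ?thesis by (rule rot_invariant_aux[OF mf c])
next
  case True
  have "Im c = 0"
  proof -
    have "(Re c)^2 + (Im c)^2 = 1" using c by (simp add: cmod_def)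
    thus ?thesis using True by simp
  qed
  hence cm: "c = \<i> * \<i>" using True by (simp add: complex_eq_iff)
  have m: "(\<lambda>z. f (\<i> * z)) \<in> borel_measurable borel"
    by (rule meas_comp_cont[OF mf]) (intro continuous_intros)
  have "(\<integral>\<^sup>+z. f (c * z) \<partial>lborel) = (\<integral>\<^sup>+z. (\<lambda>w. f (\<i> * w)) (\<i> * z) \<partial>lborel)"
    by (simp add: cm mult.assoc)
  also have "\<dots> = (\<integral>\<^sup>+z. f (\<i> * z) \<partial>lborel)"
    by (rule rot_invariant_aux[OF m]) auto
  also have "\<dots> = (\<integral>\<^sup>+z. f z \<partial>lborel)"
    by (rule rot_invariant_aux[OF mf]) auto
  finally show ?thesis .
qed

lemma submean_rot:
  fixes p :: real
  assumes holh: "h holomorphic_on UNIV" and p: "0 < p" and z: "z \<noteq> 0"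
    and nzs: "\<And>w. w \<in> sphere z0 (cmod z) \<Longrightarrow> h w \<noteq> 0"
  shows "cmod (h z0) powr p \<le> integral {0..1} (\<lambda>t. cmod (h (z0 + ee t * z)) powr p)"
proof -
  define s where "s = z / of_real (cmod z)"
  have ns: "cmod s = 1" using z by (simp add: s_def norm_divide)
  have sz: "s * of_real (cmod z) = z" using z by (simp add: s_def)
  define h' where "h' w = h (z0 + s * (w - z0))" for w
  have "(h \<circ> (\<lambda>w. z0 + s * (w - z0))) holomorphic_on UNIV"
    by (intro holomorphic_on_compose holomorphic_intros holomorphic_on_subset[OF holh]) auto
  moreover have "h' = h \<circ> (\<lambda>w. z0 + s * (w - z0))" by (rule ext) (simp add: h'_def)
  ultimately have holh': "h' holomorphic_on UNIV" by simp
  have nzs': "h' w \<noteq> 0" if "w \<in> sphere z0 (cmod z)" for w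
  proof -
    have "z0 + s * (w - z0) \<in> sphere z0 (cmod z)"
      using that ns by (simp add: dist_norm norm_mult norm_minus_commute)
    thus ?thesis using nzs by (simp add: h'_def)
  qed
  have r: "0 < cmod z" using z by simp
  have "cmod (h' z0) powr p \<le> integral {0..1} (\<lambda>t. cmod (h' (z0 + cmod z * ee t)) powr p)"
    by (rule submean_circle[OF holh' p r nzs'])
  moreover have "h' (z0 + cmod z * ee t) = h (z0 + ee t * z)" for t
  proof -
    have e: "z0 + s * (of_real (cmod z) * ee t) = z0 + ee t * z" using sz by (metis mult.assoc mult.commute)
    have e2: "z0 + of_real (cmod z) * ee t - z0 = of_real (cmod z) * ee t" by simp
    show ?thesis unfolding h'_def e2 e ..
  qed
  ultimately show ?thesis by (simp add: h'_def)
qed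

lemma sphere_null_lborel: "sphere (c::complex) r \<in> null_sets lborel"
  using negligible_sphere[of c r]
  by (auto simp: null_sets_completion_iff negligible_iff_null_sets negligible_convex_frontier)

lemma area_submean:
  fixes p :: real
  assumes holh: "h holomorphic_on UNIV" and p: "0 < p"
  shows "ennreal (pi * cmod (h z0) powr p) \<le> (\<integral>\<^sup>+z. indicator (ball z0 1) z * ennreal (cmod (h z) powr p) \<partial>lborel)"
proof (cases "h z0 = 0")
  case True thus ?thesis by simp
next
  case False
  define \<phi> where "\<phi> z = ennreal (cmod (h z) powr p)" for z
  have ch: "continuous_on UNIV h" using holh holomorphic_on_imp_continuous_on by blast
  have cphi: "continuous_on UNIV (\<lambda>z. cmod (h z) powr p)"
    using p by (intro continuous_on_powr' continuous_intros ch) auto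
  have mphi [measurable]: "\<phi> \<in> borel_measurable borel"
    unfolding \<phi>_def using borel_measurable_continuous_onI[OF cphi] by measurable
  define F where "F z = indicator (ball (0::complex) 1) z * \<phi> (z0 + z)" for z
  have cplus: "continuous_on UNIV (\<lambda>z::complex. z0 + z)" by (intro continuous_intros)
  have mpc [measurable]: "(\<lambda>z. \<phi> (z0 + z)) \<in> borel_measurable borel" by (rule meas_comp_cont[OF mphi cplus])
  have [measurable]: "ball (0::complex) 1 \<in> sets borel" by simp
  have [measurable]: "ball z0 1 \<in> sets borel" by simp
  have mF: "F \<in> borel_measurable borel"
    unfolding F_def by measurable
  have T: "(\<integral>\<^sup>+z. indicator (ball z0 1) z * \<phi> z \<partial>lborel) = (\<integral>\<^sup>+z. F z \<partial>lborel)"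
  proof -
    have "(\<integral>\<^sup>+z. indicator (ball z0 1) z * \<phi> z \<partial>lborel) =
          (\<integral>\<^sup>+z. indicator (ball z0 1) z * \<phi> z \<partial>(distr lborel borel ((+) z0)))"
      by (simp add: lborel_distr_plus)
    also have "\<dots> = (\<integral>\<^sup>+z. indicator (ball z0 1) (z0 + z) * \<phi> (z0 + z) \<partial>lborel)"
      by (rule nn_integral_distr) auto
    also have "\<dots> = (\<integral>\<^sup>+z. F z \<partial>lborel)"
      by (intro nn_integral_cong) (auto simp: F_def indicator_def dist_norm)
    finally show ?thesis .
  qed
  define Q where "Q = (\<integral>\<^sup>+z. F z \<partial>lborel)"
  have R: "(\<integral>\<^sup>+z. indicator (ball 0 1) z * \<phi> (z0 + ee t * z) \<partial>lborel) = Q" for t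
  proof -
    have "(\<integral>\<^sup>+z. F (ee t * z) \<partial>lborel) = Q" unfolding Q_def by (rule rot_invariant[OF mF]) simp
    moreover have "F (ee t * z) = indicator (ball 0 1) z * \<phi> (z0 + ee t * z)" for z
      by (simp add: F_def indicator_def norm_mult)
    ultimately show ?thesis by simp
  qed
  define G where "G t z = indicator {0..1::real} t * (indicator (ball (0::complex) 1) z * \<phi> (z0 + ee t * z))" for t z
  have cG: "continuous_on UNIV (\<lambda>p::real \<times> complex. z0 + ee (fst p) * snd p)"
    by (intro continuous_intros)
  have mG: "case_prod G \<in> borel_measurable (lborel \<Otimes>\<^sub>M lborel)"
  proof (rule meas_pair_lborel)
    have m3 [measurable]: "(\<lambda>p::real \<times> complex. \<phi> (z0 + ee (fst p) * snd p)) \<in> borel_measurable borel"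
      by (rule meas_comp_cont[OF mphi cG])
    have mi1: "(indicator {0..1::real} :: real \<Rightarrow> ennreal) \<in> borel_measurable borel" by measurable
    have mi2: "(indicator (ball (0::complex) 1) :: complex \<Rightarrow> ennreal) \<in> borel_measurable borel" by measurable
    have m1 [measurable]: "(\<lambda>p::real \<times> complex. indicator {0..1::real} (fst p) :: ennreal) \<in> borel_measurable borel"
      by (rule meas_comp_cont[OF mi1]) (intro continuous_intros)
    have m2 [measurable]: "(\<lambda>p::real \<times> complex. indicator (ball (0::complex) 1) (snd p) :: ennreal) \<in> borel_measurable borel"
      by (rule meas_comp_cont[OF mi2]) (intro continuous_intros)
    have "(\<lambda>p::real \<times> complex. indicator {0..1::real} (fst p) * (indicator (ball (0::complex) 1) (snd p) * \<phi> (z0 + ee (fst p) * snd p)))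
       \<in> borel_measurable borel" by measurable
    moreover have "case_prod G = (\<lambda>p::real \<times> complex. indicator {0..1::real} (fst p) * (indicator (ball (0::complex) 1) (snd p) * \<phi> (z0 + ee (fst p) * snd p)))"
      by (rule ext) (simp add: G_def case_prod_beta')
    ultimately show "case_prod G \<in> borel_measurable borel" by simp
  qed
  have "Q = Q * emeasure lborel {0..1::real}" by simp
  also have "\<dots> = (\<integral>\<^sup>+t. Q * indicator {0..1::real} t \<partial>lborel)"
    by (rule nn_integral_cmult_indicator[symmetric]) simp
  also have "\<dots> = (\<integral>\<^sup>+t. (\<integral>\<^sup>+z. G t z \<partial>lborel) \<partial>lborel)"
  proof (rule nn_integral_cong)
    fix t :: real
    have mz: "(\<lambda>z. indicator (ball (0::complex) 1) z * \<phi> (z0 + ee t * z)) \<in> borel_measurable borel"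
    proof -
      have "continuous_on UNIV (\<lambda>z::complex. z0 + ee t * z)" by (intro continuous_intros)
      from meas_comp_cont[OF mphi this] show ?thesis by measurable
    qed
    show "Q * indicator {0..1} t = (\<integral>\<^sup>+z. G t z \<partial>lborel)"
      unfolding G_def using nn_integral_cmult[OF mz[folded measurable_lborel2], of "indicator {0..1} t"] R[of t]
      by (simp add: mult.commute)
  qed
  also have "\<dots> = (\<integral>\<^sup>+z. (\<integral>\<^sup>+t. G t z \<partial>lborel) \<partial>lborel)"
    by (rule lborel_pair.Fubini'[OF mG, symmetric])
  finally have QF: "Q = (\<integral>\<^sup>+z. (\<integral>\<^sup>+t. G t z \<partial>lborel) \<partial>lborel)" .
  define D where "D = dist z0 ` {w \<in> cball z0 1. h w = 0}"
  have finD: "finite D" unfolding D_def using finite_zeros_cball[OF holh False] by simp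
  have AEgood: "AE z in (lborel::complex measure). z \<notin> sphere 0 0 \<and> (\<forall>d\<in>D. z \<notin> sphere 0 d)"
  proof -
    have "AE z in (lborel::complex measure). z \<notin> sphere 0 0" by (rule AE_not_in[OF sphere_null_lborel])
    moreover have "AE z in (lborel::complex measure). \<forall>d\<in>D. z \<notin> sphere 0 d"
      using finD by (intro eventually_ball_finite ballI AE_not_in[OF sphere_null_lborel])
    ultimately show ?thesis by eventually_elim auto
  qed
  have pw: "indicator (ball (0::complex) 1) z * ennreal (cmod (h z0) powr p) \<le> (\<integral>\<^sup>+t. G t z \<partial>lborel)"
    if zg: "z \<notin> sphere 0 0 \<and> (\<forall>d\<in>D. z \<notin> sphere 0 d)" for z
  proof (cases "z \<in> ball 0 1")
    case False thus ?thesis by simp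
  next
    case True
    have z0': "z \<noteq> 0" using zg by simp
    have nzs: "h w \<noteq> 0" if "w \<in> sphere z0 (cmod z)" for w
    proof
      assume hw: "h w = 0"
      have "dist z0 w = cmod z" using that by simp
      moreover have "cmod z < 1" using True by simp
      ultimately have "w \<in> {w \<in> cball z0 1. h w = 0}" using hw by simp
      hence "cmod z \<in> D" unfolding D_def using \<open>dist z0 w = cmod z\<close> by (metis image_eqI)
      thus False using zg by (force simp: dist_norm)
    qed
    have sm: "cmod (h z0) powr p \<le> integral {0..1} (\<lambda>t. cmod (h (z0 + ee t * z)) powr p)"
      by (rule submean_rot[OF holh p z0' nzs])
    have cz: "continuous_on {0..1} (\<lambda>t. cmod (h (z0 + ee t * z)) powr p)"
    proof -
      have "continuous_on {0..1} (\<lambda>t. h (z0 + ee t * z))"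
        by (rule continuous_on_compose2[OF ch]) (auto intro!: continuous_intros)
      thus ?thesis using p by (intro continuous_on_powr' continuous_intros) auto
    qed
    have hi: "((\<lambda>t. cmod (h (z0 + ee t * z)) powr p) has_integral integral {0..1} (\<lambda>t. cmod (h (z0 + ee t * z)) powr p)) {0..1}"
      using integrable_continuous_interval[OF cz] by (simp add: has_integral_integral)
    have "(\<integral>\<^sup>+t. G t z \<partial>lborel) = (\<integral>\<^sup>+t. ennreal (cmod (h (z0 + ee t * z)) powr p) * indicator {0..1} t \<partial>lborel)"
      using True by (intro nn_integral_cong) (simp add: G_def \<phi>_def mult.commute)
    also have "\<dots> = ennreal (integral {0..1} (\<lambda>t. cmod (h (z0 + ee t * z)) powr p))"
      by (rule nn_integral_has_integral_lebesgue'[OF _ hi]) simp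
    finally show ?thesis using True sm by (simp add: ennreal_leI)
  qed
  have "(\<integral>\<^sup>+z. indicator (ball (0::complex) 1) z * ennreal (cmod (h z0) powr p) \<partial>lborel) \<le> Q"
    unfolding QF by (rule nn_integral_mono_AE) (use AEgood pw in \<open>auto elim: AE_mp\<close>)
  moreover have "(\<integral>\<^sup>+z. indicator (ball (0::complex) 1) z * ennreal (cmod (h z0) powr p) \<partial>lborel) =
      ennreal (pi * cmod (h z0) powr p)"
  proof -
    have "(\<integral>\<^sup>+z. indicator (ball (0::complex) 1) z * ennreal (cmod (h z0) powr p) \<partial>lborel) =
        (\<integral>\<^sup>+z. ennreal (cmod (h z0) powr p) * indicator (ball (0::complex) 1) z \<partial>lborel)"
      by (simp add: mult.commute)
    also have "\<dots> = ennreal (cmod (h z0) powr p) * emeasure lborel (ball (0::complex) 1)"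
      by (rule nn_integral_cmult_indicator) simp
    also have "\<dots> = ennreal (pi * cmod (h z0) powr p)"
      by (simp add: emeasure_ball unit_ball_vol_2 ennreal_mult'[symmetric] mult.commute)
    finally show ?thesis .
  qed
  ultimately show ?thesis using T by (simp add: Q_def \<phi>_def)
qed

lemma gauss_1d:
  fixes s :: real assumes s: "0 < s"
  shows "(\<integral>\<^sup>+x. ennreal (exp (- s * x^2)) \<partial>lborel) = ennreal (sqrt (pi / s))"
proof -
  define \<sigma> where "\<sigma> = sqrt (1 / (2 * s))"
  have s2: "\<sigma>^2 = 1 / (2 * s)" using s by (simp add: \<sigma>_def)
  have k: "sqrt (2 * pi * \<sigma>^2) = sqrt (pi / s)" using s by (simp add: s2)
  have eq: "exp (- s * x^2) = sqrt (pi / s) * normal_density 0 \<sigma> x" for x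
  proof -
    have "sqrt (pi / s) * normal_density 0 \<sigma> x = sqrt (pi / s) / sqrt (pi / s) * exp (- (x^2) / (2 * (\<sigma>^2)))"
      unfolding normal_density_def k[symmetric] by simp
    also have "\<dots> = exp (- s * x^2)" using s by (simp add: s2)
    finally show ?thesis by simp
  qed
  have "(\<integral>\<^sup>+x. ennreal (exp (- s * x^2)) \<partial>lborel) = (\<integral>\<^sup>+x. ennreal (sqrt (pi / s)) * ennreal (normal_density 0 \<sigma> x) \<partial>lborel)"
  proof (intro nn_integral_cong)
    fix x :: real
    have "ennreal (sqrt (pi / s) * normal_density 0 \<sigma> x) = ennreal (sqrt (pi / s)) * ennreal (normal_density 0 \<sigma> x)"
      by (rule ennreal_mult) (use s in auto)
    thus "ennreal (exp (- s * x^2)) = ennreal (sqrt (pi / s)) * ennreal (normal_density 0 \<sigma> x)"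
      by (simp only: eq[of x])
  qed
  also have "\<dots> = ennreal (sqrt (pi / s)) * (\<integral>\<^sup>+x. ennreal (normal_density 0 \<sigma> x) \<partial>lborel)"
    by (rule nn_integral_cmult) simp
  also have "(\<integral>\<^sup>+x. ennreal (normal_density 0 \<sigma> x) \<partial>lborel) = 1"
  proof -
    have sp: "0 < \<sigma>" using s by (simp add: \<sigma>_def)
    show ?thesis by (subst nn_integral_eq_integral) (auto simp: integrable_normal_density[OF sp] integral_normal_density[OF sp])
  qed
  finally show ?thesis by simp
qed

lemma gauss_2d:
  fixes s :: real assumes s: "0 < s"
  shows "(\<integral>\<^sup>+z. ennreal (exp (- s * cmod (z - c)^2)) \<partial>lborel) = ennreal (pi / s)"
proof -
  have m: "(\<lambda>z::complex. ennreal (exp (- s * cmod z^2))) \<in> borel_measurable borel" by measurable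
  have m2: "(\<lambda>z::complex. ennreal (exp (- s * cmod (z - c)^2))) \<in> borel_measurable borel" by measurable
  have "(\<integral>\<^sup>+z. ennreal (exp (- s * cmod (z - c)^2)) \<partial>lborel) =
        (\<integral>\<^sup>+z. ennreal (exp (- s * cmod (z - c)^2)) \<partial>(distr lborel borel ((+) c)))"
    by (simp add: lborel_distr_plus)
  also have "\<dots> = (\<integral>\<^sup>+z. ennreal (exp (- s * cmod z^2)) \<partial>lborel)"
    by (subst nn_integral_distr) (auto simp: m2)
  also have "\<dots> = (\<integral>\<^sup>+x. (\<integral>\<^sup>+y. ennreal (exp (- s * x^2)) * ennreal (exp (- s * y^2)) \<partial>lborel) \<partial>lborel)"
    by (subst nn_integral_complex_iter(1)[OF m])
       (intro nn_integral_cong, simp add: cmod_power2 ennreal_mult[symmetric] exp_add[symmetric] algebra_simps)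
  also have "\<dots> = (\<integral>\<^sup>+x. ennreal (exp (- s * x^2)) * ennreal (sqrt (pi / s)) \<partial>lborel)"
    by (intro nn_integral_cong) (simp add: nn_integral_cmult gauss_1d[OF s, simplified])
  also have "\<dots> = ennreal (sqrt (pi / s)) * ennreal (sqrt (pi / s))"
    by (simp add: nn_integral_multc gauss_1d[OF s, simplified])
  also have "\<dots> = ennreal (pi / s)"
    using s by (simp add: ennreal_mult[symmetric])
  finally show ?thesis .
qed

lemma AE_open_point:
  fixes S :: "'a::euclidean_space set"
  assumes ae: "AE x in lebesgue. P x" and S: "open S" "S \<noteq> {}"
  shows "\<exists>x\<in>S. P x"
proof (rule ccontr)
  assume "\<not> (\<exists>x\<in>S. P x)"
  from ae obtain N where N: "{x \<in> space lebesgue. \<not> P x} \<subseteq> N" "emeasure lebesgue N = 0" "N \<in> sets lebesgue"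
    by (rule AE_E)
  have "S \<subseteq> N" using N(1) \<open>\<not> (\<exists>x\<in>S. P x)\<close> by auto
  moreover have "negligible N" using N by (simp add: negligible_iff_null_sets null_sets_def)
  ultimately have "negligible S" by (rule negligible_subset[rotated])
  thus False using open_not_negligible[OF S] by simp
qed

lemma cont_AE_bound_everywhere:
  fixes f :: "'a::euclidean_space \<Rightarrow> real"
  assumes cf: "continuous_on UNIV f" and ae: "AE x in lebesgue. f x \<le> C"
  shows "f x \<le> C"
proof (rule ccontr)
  assume "\<not> f x \<le> C"
  have "open {x. C < f x}" using cf by (intro open_Collect_less continuous_intros) auto
  moreover have "x \<in> {x. C < f x}" using \<open>\<not> f x \<le> C\<close> by simp
  hence "{x. C < f x} \<noteq> {}" by blast
  ultimately obtain y where "y \<in> {x. C < f x}" "f y \<le> C" using AE_open_point[OF ae] by blast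
  thus False by simp
qed

lemma meas_param_integral:
  fixes F :: "complex \<Rightarrow> complex \<Rightarrow> real"
  assumes cF: "continuous_on UNIV (\<lambda>p::complex \<times> complex. F (fst p) (snd p))"
  shows "(\<lambda>w. \<integral>\<^sup>+z. ennreal (F w z) \<partial>lebesgue) \<in> borel_measurable lebesgue"
proof -
  have "(\<lambda>p::complex \<times> complex. F (fst p) (snd p)) \<in> borel_measurable borel"
    by (rule borel_measurable_continuous_onI[OF cF])
  hence "(\<lambda>p::complex \<times> complex. ennreal (F (fst p) (snd p))) \<in> borel_measurable borel" by measurable
  hence "case_prod (\<lambda>w z. ennreal (F w z)) \<in> borel_measurable (lborel \<Otimes>\<^sub>M lborel)"
    by (intro meas_pair_lborel) (simp add: case_prod_beta')
  hence "(\<lambda>w. \<integral>\<^sup>+z. ennreal (F w z) \<partial>lborel) \<in> borel_measurable lborel"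
    by (rule lborel.borel_measurable_nn_integral)
  hence "(\<lambda>w. \<integral>\<^sup>+z. ennreal (F w z) \<partial>lborel) \<in> borel_measurable lebesgue"
    by (rule measurable_completion)
  thus ?thesis by (simp add: nn_integral_completion)
qed

lemma kw_norm: "cmod (kw w v) = exp ((cmod v ^ 2 - cmod (v - w) ^ 2) / 2)"
proof -
  have "cmod (kw w v) = exp (Re (cnj w * v) - cmod w ^ 2 / 2)"
    by (simp add: kw_def norm_exp_eq_Re)
  also have "Re (cnj w * v) - cmod w ^ 2 / 2 = (cmod v ^ 2 - cmod (v - w) ^ 2) / 2"
    unfolding cmod_power2 by (simp add: power2_eq_square algebra_simps)
  finally show ?thesis .
qed

lemma exp_powr_real: "exp (x::real) powr p = exp (p * x)"
  by (simp add: powr_def)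

lemma integrand_form:
  fixes p :: real
  shows "cmod (kw w (\<psi> z)) powr p * cmod (u z) powr p * exp (- (p / 2) * cmod z ^ 2) / (1 + cmod z) powr p
   = exp (- (p/2) * cmod (\<psi> z - w)^2) * (cmod (u z) / (1 + cmod z) * exp ((cmod (\<psi> z) ^ 2 - cmod z ^ 2) / 2)) powr p"
proof -
  define A where "A = cmod (\<psi> z) ^ 2"
  define D where "D = cmod (\<psi> z - w) ^ 2"
  define Z where "Z = cmod z ^ 2"
  define U where "U = cmod (u z) powr p"
  define W where "W = (1 + cmod z) powr p"
  have e1: "cmod (kw w (\<psi> z)) powr p = exp (p * ((A - D)/2))"
    by (simp add: kw_norm exp_powr_real A_def D_def)
  have e2: "(cmod (u z) / (1 + cmod z) * exp ((cmod (\<psi> z) ^ 2 - cmod z ^ 2) / 2)) powr p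
      = U / W * exp (p * ((A - Z)/2))"
    by (simp add: powr_mult powr_divide exp_powr_real U_def W_def A_def Z_def)
  have e3: "exp (p * ((A - D)/2)) * exp (-(p/2) * Z) = exp (-(p/2) * D) * exp (p * ((A - Z)/2))"
    by (simp add: exp_add[symmetric] field_simps)
  have "cmod (kw w (\<psi> z)) powr p * cmod (u z) powr p * exp (- (p / 2) * cmod z ^ 2) / (1 + cmod z) powr p
      = U / W * (exp (p * ((A - D)/2)) * exp (-(p/2) * Z))"
    unfolding e1 by (simp add: U_def W_def Z_def)
  also have "\<dots> = U / W * (exp (-(p/2) * D) * exp (p * ((A - Z)/2)))" by (simp only: e3)
  also have "\<dots> = exp (- (p/2) * cmod (\<psi> z - w)^2) * (cmod (u z) / (1 + cmod z) * exp ((cmod (\<psi> z) ^ 2 - cmod z ^ 2) / 2)) powr p"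
    unfolding e2 by (simp add: D_def)
  finally show ?thesis .
qed

lemma lower_bound:
  fixes p :: real
  assumes holu: "u holomorphic_on UNIV" and holp: "\<psi> holomorphic_on UNIV" and p: "0 < p"
  shows "ennreal (pi * exp (-p/2) * (2 + cmod z0) powr (-p) *
            (cmod (u z0) * exp (Re (cnj w * \<psi> z0) - cmod w ^ 2 / 2 - cmod z0 ^ 2 / 2)) powr p)
   \<le> (\<integral>\<^sup>+ z. ennreal (cmod (kw w (\<psi> z)) powr p * cmod (u z) powr p * exp (- (p / 2) * cmod z ^ 2) / (1 + cmod z) powr p) \<partial>lebesgue)"
proof -
  define h where "h z = u z * exp (cnj w * \<psi> z - cnj z0 * z)" for z
  have holh: "h holomorphic_on UNIV" unfolding h_def by (intro holomorphic_intros holu holp)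
  have nh: "cmod (h z) = cmod (u z) * exp (Re (cnj w * \<psi> z) - Re (cnj z0 * z))" for z
    by (simp add: h_def norm_mult norm_exp_eq_Re)
  define E where "E = exp (p * (cmod z0 ^ 2 / 2 - cmod w ^ 2 / 2))"
  define K where "K = E * exp (-p/2) * (2 + cmod z0) powr (-p)"
  have K0: "0 \<le> K" by (simp add: K_def E_def)
  let ?I = "\<lambda>z. cmod (kw w (\<psi> z)) powr p * cmod (u z) powr p * exp (- (p / 2) * cmod z ^ 2) / (1 + cmod z) powr p"
  have ident: "?I z = cmod (h z) powr p * E * exp (- (p/2) * cmod (z - z0) ^ 2) / (1 + cmod z) powr p" for z
  proof -
    have nk: "cmod (kw w (\<psi> z)) = exp (Re (cnj w * \<psi> z) - cmod w ^ 2 / 2)"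
      by (simp add: kw_def norm_exp_eq_Re)
    have sq: "cmod (z - z0) ^ 2 = cmod z ^ 2 - 2 * Re (cnj z0 * z) + cmod z0 ^ 2"
      unfolding cmod_power2 by (simp add: power2_eq_square algebra_simps)
    have ex: "exp (p * (Re (cnj w * \<psi> z) - cmod w ^ 2 / 2)) * exp (- (p / 2) * cmod z ^ 2)
        = exp (p * (Re (cnj w * \<psi> z) - Re (cnj z0 * z))) * E * exp (- (p/2) * cmod (z - z0) ^ 2)"
      unfolding E_def sq by (simp add: exp_add[symmetric] algebra_simps)
    have "?I z = cmod (u z) powr p * (exp (p * (Re (cnj w * \<psi> z) - cmod w ^ 2 / 2)) * exp (- (p / 2) * cmod z ^ 2)) / (1 + cmod z) powr p"
      by (simp add: nk exp_powr_real mult_ac)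
    also have "\<dots> = cmod (u z) powr p * (exp (p * (Re (cnj w * \<psi> z) - Re (cnj z0 * z))) * E * exp (- (p/2) * cmod (z - z0) ^ 2)) / (1 + cmod z) powr p"
      by (simp only: ex)
    also have "\<dots> = cmod (h z) powr p * E * exp (- (p/2) * cmod (z - z0) ^ 2) / (1 + cmod z) powr p"
      by (simp add: nh powr_mult exp_powr_real mult_ac)
    finally show ?thesis .
  qed
  have pw: "ennreal K * (indicator (ball z0 1) z * ennreal (cmod (h z) powr p)) \<le> ennreal (?I z)" for z
  proof (cases "z \<in> ball z0 1")
    case False thus ?thesis by simp
  next
    case True
    have d: "cmod (z - z0) < 1" using True by (simp add: dist_norm norm_minus_commute)
    have e1: "exp (-p/2) \<le> exp (- (p/2) * cmod (z - z0) ^ 2)"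
    proof -
      have "cmod (z - z0) ^ 2 \<le> 1" using d by (simp add: power_le_one)
      thus ?thesis using p by (simp add: mult_left_mono)
    qed
    have e2: "(2 + cmod z0) powr (-p) \<le> 1 / (1 + cmod z) powr p"
    proof -
      have "1 + cmod z \<le> 2 + cmod z0"
        using d norm_triangle_ineq2[of z z0] by simp
      hence "(1 + cmod z) powr p \<le> (2 + cmod z0) powr p" using p by (intro powr_mono2) auto
      moreover have "0 < 1 + cmod z" "0 < 2 + cmod z0" by (simp_all add: add_pos_nonneg)
      ultimately show ?thesis using p by (simp add: powr_minus divide_simps)
    qed
    have "K * cmod (h z) powr p = cmod (h z) powr p * E * (exp (-p/2) * (2 + cmod z0) powr (-p))"
      by (simp add: K_def mult_ac)
    also have "\<dots> \<le> cmod (h z) powr p * E * (exp (- (p/2) * cmod (z - z0) ^ 2) * (1 / (1 + cmod z) powr p))"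
      by (intro mult_left_mono mult_mono e1 e2) (auto simp: E_def)
    also have "\<dots> = ?I z" by (subst ident) simp
    finally show ?thesis using True K0 by (simp add: ennreal_mult[symmetric] ennreal_leI)
  qed
  have ch: "continuous_on UNIV h" using holh holomorphic_on_imp_continuous_on by blast
  have mh: "(\<lambda>z. indicator (ball z0 1) z * ennreal (cmod (h z) powr p)) \<in> borel_measurable lborel"
  proof -
    have "continuous_on UNIV (\<lambda>z. cmod (h z) powr p)"
      using p by (intro continuous_on_powr' continuous_intros ch) auto
    hence [measurable]: "(\<lambda>z. cmod (h z) powr p) \<in> borel_measurable borel" by (rule borel_measurable_continuous_onI)
    have [measurable]: "ball z0 1 \<in> sets borel" by simp
    show ?thesis by simp measurable
  qed
  have "ennreal (K * (pi * cmod (h z0) powr p)) = ennreal K * ennreal (pi * cmod (h z0) powr p)"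
    using K0 by (simp add: ennreal_mult)
  also have "\<dots> \<le> ennreal K * (\<integral>\<^sup>+z. indicator (ball z0 1) z * ennreal (cmod (h z) powr p) \<partial>lborel)"
    by (intro mult_left_mono area_submean[OF holh p]) simp
  also have "\<dots> = (\<integral>\<^sup>+z. ennreal K * (indicator (ball z0 1) z * ennreal (cmod (h z) powr p)) \<partial>lborel)"
    by (rule nn_integral_cmult[OF mh, symmetric])
  also have "\<dots> \<le> (\<integral>\<^sup>+z. ennreal (?I z) \<partial>lborel)"
    by (intro nn_integral_mono pw)
  also have "\<dots> = (\<integral>\<^sup>+z. ennreal (?I z) \<partial>lebesgue)"
    by (simp add: nn_integral_completion)
  finally have main: "ennreal (K * (pi * cmod (h z0) powr p)) \<le> (\<integral>\<^sup>+z. ennreal (?I z) \<partial>lebesgue)" .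
  have "K * (pi * cmod (h z0) powr p) = pi * exp (-p/2) * (2 + cmod z0) powr (-p) *
            (cmod (u z0) * exp (Re (cnj w * \<psi> z0) - cmod w ^ 2 / 2 - cmod z0 ^ 2 / 2)) powr p"
  proof -
    have r: "Re (cnj z0 * z0) = cmod z0 ^ 2" unfolding cmod_power2 by (simp add: power2_eq_square)
    have "cmod (h z0) powr p * E = (cmod (u z0) * exp (Re (cnj w * \<psi> z0) - cmod w ^ 2 / 2 - cmod z0 ^ 2 / 2)) powr p"
      unfolding nh r E_def by (simp add: powr_mult exp_powr_real mult.assoc exp_add[symmetric] algebra_simps)
    thus ?thesis by (simp add: K_def mult_ac)
  qed
  with main show ?thesis by simp
qed

lemma cont_meas_leb:
  fixes f :: "complex \<Rightarrow> real"
  assumes "continuous_on UNIV f"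
  shows "f \<in> borel_measurable lebesgue" and "(\<lambda>z. ennreal (f z)) \<in> borel_measurable lebesgue"
proof -
  have [measurable]: "f \<in> borel_measurable borel" by (rule borel_measurable_continuous_onI[OF assms])
  have "f \<in> borel_measurable lborel" by simp
  thus "f \<in> borel_measurable lebesgue" by (rule measurable_completion)
  have "(\<lambda>z. ennreal (f z)) \<in> borel_measurable lborel" by simp
  thus "(\<lambda>z. ennreal (f z)) \<in> borel_measurable lebesgue" by (rule measurable_completion)
qed

lemma upper_affine:
  fixes K s :: real and F :: "complex \<Rightarrow> real"
  assumes s: "0 < s" and a: "a \<noteq> 0" and psi: "\<And>z. \<psi> z = a * z + b"
    and bnd: "\<And>z. F z \<le> K * exp (- s * cmod (\<psi> z - w)^2)" and K: "0 \<le> K"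
  shows "(\<integral>\<^sup>+z. ennreal (F z) \<partial>lebesgue) \<le> ennreal (K * (pi / (s * cmod a ^ 2)))"
proof -
  define c where "c = (w - b) / a"
  have eq: "cmod (\<psi> z - w)^2 = cmod a ^ 2 * cmod (z - c)^2" for z
  proof -
    have "\<psi> z - w = a * (z - c)" using a by (simp add: psi c_def field_simps)
    thus ?thesis by (simp add: norm_mult power_mult_distrib)
  qed
  have sa: "0 < s * cmod a ^ 2" using s a by simp
  have m: "(\<lambda>z::complex. ennreal (exp (- (s * cmod a ^ 2) * cmod (z - c)^2))) \<in> borel_measurable lborel" by simp
  have "(\<integral>\<^sup>+z. ennreal (F z) \<partial>lebesgue) \<le> (\<integral>\<^sup>+z. ennreal (K * exp (- (s * cmod a ^ 2) * cmod (z - c)^2)) \<partial>lebesgue)"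
    by (intro nn_integral_mono ennreal_leI) (use bnd eq in \<open>simp add: mult.assoc\<close>)
  also have "\<dots> = (\<integral>\<^sup>+z. ennreal K * ennreal (exp (- (s * cmod a ^ 2) * cmod (z - c)^2)) \<partial>lborel)"
    using K by (simp add: nn_integral_completion ennreal_mult)
  also have "\<dots> = ennreal K * ennreal (pi / (s * cmod a ^ 2))"
    by (simp only: nn_integral_cmult[OF m] gauss_2d[OF sa])
  also have "\<dots> = ennreal (K * (pi / (s * cmod a ^ 2)))"
    by (rule ennreal_mult[symmetric]) (use K sa in auto)
  finally show ?thesis .
qed

lemma cont_integrand:
  fixes p :: real
  assumes cu: "continuous_on UNIV u" and cp: "continuous_on UNIV \<psi>" and p: "0 < p"
  shows "continuous_on UNIV (\<lambda>q::complex \<times> complex. cmod (kw (fst q) (\<psi> (snd q))) powr p * cmod (u (snd q)) powr p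
            * exp (- (p / 2) * cmod (snd q) ^ 2) / (1 + cmod (snd q)) powr p)"
    and "continuous_on UNIV (\<lambda>q::complex \<times> complex. cmod (kw (fst q) (\<psi> (snd q))) powr p * (1 + cmod (fst q)) powr p
            * cmod (u (snd q)) powr p * exp (- (p / 2) * cmod (snd q) ^ 2) / (1 + cmod (snd q)) powr p)"
proof -
  have cus: "continuous_on UNIV (\<lambda>q::complex \<times> complex. u (snd q))"
    by (rule continuous_on_compose2[OF cu]) (auto intro: continuous_intros)
  have cps: "continuous_on UNIV (\<lambda>q::complex \<times> complex. \<psi> (snd q))"
    by (rule continuous_on_compose2[OF cp]) (auto intro: continuous_intros)
  have ck: "continuous_on UNIV (\<lambda>q::complex \<times> complex. kw (fst q) (\<psi> (snd q)))"
    unfolding kw_def by (intro continuous_intros cps) auto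
  have nz1: "1 + cmod z \<noteq> 0" for z :: complex
    by (metis add_pos_nonneg norm_ge_zero not_one_le_zero order_less_irrefl zero_less_one)
  have nz: "\<forall>q::complex \<times> complex. (1 + cmod (snd q)) powr p \<noteq> 0"
    using nz1 by simp
  show "continuous_on UNIV (\<lambda>q::complex \<times> complex. cmod (kw (fst q) (\<psi> (snd q))) powr p * cmod (u (snd q)) powr p
            * exp (- (p / 2) * cmod (snd q) ^ 2) / (1 + cmod (snd q)) powr p)"
    using p nz by (intro continuous_on_divide continuous_intros continuous_on_powr' ck cus) auto
  show "continuous_on UNIV (\<lambda>q::complex \<times> complex. cmod (kw (fst q) (\<psi> (snd q))) powr p * (1 + cmod (fst q)) powr p
            * cmod (u (snd q)) powr p * exp (- (p / 2) * cmod (snd q) ^ 2) / (1 + cmod (snd q)) powr p)"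
    using p nz by (intro continuous_on_divide continuous_intros continuous_on_powr' ck cus) auto
qed

lemma bwd_core:
  fixes p :: real
  assumes holu: "u holomorphic_on UNIV" and holp: "\<psi> holomorphic_on UNIV" and p: "0 < p"
    and w: "cmod (w - \<psi> z0) < 1"
  shows "ennreal (pi * exp (-p) * (1/2) powr p * (cmod (u z0) / (1 + cmod z0) * exp ((cmod (\<psi> z0)^2 - cmod z0^2)/2)) powr p)
    \<le> (\<integral>\<^sup>+ z. ennreal (cmod (kw w (\<psi> z)) powr p * cmod (u z) powr p * exp (- (p / 2) * cmod z ^ 2) / (1 + cmod z) powr p) \<partial>lebesgue)"
proof -
  define M0 where "M0 = cmod (u z0) / (1 + cmod z0) * exp ((cmod (\<psi> z0)^2 - cmod z0^2)/2)"
  define D where "D = cmod (\<psi> z0 - w) ^ 2"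
  have M00: "0 \<le> M0" by (simp add: M0_def)
  have pz: "0 < 1 + cmod z0" by (simp add: add_pos_nonneg)
  have pz2: "0 < 2 + cmod z0" by (simp add: add_pos_nonneg)
  have re: "Re (cnj w * \<psi> z0) - cmod w ^ 2 / 2 - cmod z0 ^ 2 / 2 = (cmod (\<psi> z0)^2 - cmod z0^2)/2 + (- D / 2)"
    unfolding D_def cmod_power2 by (simp add: power2_eq_square field_simps)
  have id: "cmod (u z0) * exp (Re (cnj w * \<psi> z0) - cmod w ^ 2 / 2 - cmod z0 ^ 2 / 2) = (1 + cmod z0) * M0 * exp (- D / 2)"
    unfolding re exp_add M0_def using pz by simp
  have LB: "ennreal (pi * exp (-p/2) * (2 + cmod z0) powr (-p) * ((1 + cmod z0) * M0 * exp (- D / 2)) powr p)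
    \<le> (\<integral>\<^sup>+ z. ennreal (cmod (kw w (\<psi> z)) powr p * cmod (u z) powr p * exp (- (p / 2) * cmod z ^ 2) / (1 + cmod z) powr p) \<partial>lebesgue)"
    using lower_bound[OF holu holp p, of z0 w] unfolding id .
  have a: "((1 + cmod z0) * M0 * exp (- D / 2)) powr p = (1 + cmod z0) powr p * M0 powr p * exp (p * (- D / 2))"
    using pz M00 by (simp add: powr_mult exp_powr_real)
  have b: "(2 + cmod z0) powr (-p) * (1 + cmod z0) powr p = ((1 + cmod z0) / (2 + cmod z0)) powr p"
    using pz pz2 by (simp add: powr_divide powr_minus_divide)
  have eqv: "pi * exp (-p/2) * (2 + cmod z0) powr (-p) * ((1 + cmod z0) * M0 * exp (- D / 2)) powr p
      = pi * (exp (-p/2) * exp (p * (- D / 2))) * (((1 + cmod z0) / (2 + cmod z0)) powr p * M0 powr p)"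
    unfolding a b[symmetric] by (simp only: mult_ac)
  have f1: "exp (-p) \<le> exp (-p/2) * exp (p * (- D / 2))"
  proof -
    have "D \<le> 1" using w by (simp add: D_def power_le_one norm_minus_commute)
    hence "-p \<le> -p/2 + (p * (- D / 2))" using p by (simp add: field_simps mult_left_mono)
    thus ?thesis by (simp add: exp_add[symmetric])
  qed
  have f2: "(1/2) powr p \<le> ((1 + cmod z0) / (2 + cmod z0)) powr p"
  proof (rule powr_mono2)
    show "1/2 \<le> (1 + cmod z0) / (2 + cmod z0)" using pz2 by (simp add: field_simps)
  qed (use p in auto)
  have "pi * exp (-p) * (1/2) powr p * M0 powr p = pi * (exp (-p)) * ((1/2) powr p * M0 powr p)" by simp
  also have "\<dots> \<le> pi * (exp (-p/2) * exp (p * (- D / 2))) * (((1 + cmod z0) / (2 + cmod z0)) powr p * M0 powr p)"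
  proof (rule mult_mono)
    show "pi * exp (-p) \<le> pi * (exp (-p/2) * exp (p * (- D / 2)))" using f1 by (simp add: mult_left_mono)
    show "(1/2) powr p * M0 powr p \<le> ((1 + cmod z0) / (2 + cmod z0)) powr p * M0 powr p"
      using f2 by (simp add: mult_right_mono)
  qed auto
  finally have "pi * exp (-p) * (1/2) powr p * M0 powr p \<le> pi * exp (-p/2) * (2 + cmod z0) powr (-p) * ((1 + cmod z0) * M0 * exp (- D / 2)) powr p"
    unfolding eqv .
  hence "ennreal (pi * exp (-p) * (1/2) powr p * M0 powr p) \<le> ennreal (pi * exp (-p/2) * (2 + cmod z0) powr (-p) * ((1 + cmod z0) * M0 * exp (- D / 2)) powr p)"
    by (rule ennreal_leI)
  also note LB
  finally show ?thesis unfolding M0_def .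
qed

lemma basic_facts:
  assumes holg: "g holomorphic_on UNIV" and holp: "\<psi> holomorphic_on UNIV"
    and ncg: "\<not> (\<exists>c. \<forall>z. g z = c)" and ncp: "\<not> (\<exists>c. \<forall>z. \<psi> z = c)"
  shows "deriv g holomorphic_on UNIV" "\<exists>z1. deriv g z1 \<noteq> 0" "\<exists>z1. g z1 \<noteq> 0"
    "continuous_on UNIV g" "continuous_on UNIV \<psi>" "continuous_on UNIV (deriv g)"
proof -
  show hd: "deriv g holomorphic_on UNIV" by (rule holomorphic_deriv[OF holg open_UNIV])
  show "\<exists>z1. deriv g z1 \<noteq> 0"
  proof (rule ccontr)
    assume "\<not> (\<exists>z1. deriv g z1 \<noteq> 0)"
    hence d0: "deriv g x = 0" for x by blast
    have "\<exists>c. \<forall>x\<in>UNIV. g x = c"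
    proof (rule has_field_derivative_zero_constant)
      fix x :: complex assume "x \<in> UNIV"
      show "(g has_field_derivative 0) (at x within UNIV)"
        using holomorphic_derivI[OF holg open_UNIV UNIV_I, of x UNIV] d0 by simp
    qed simp
    thus False using ncg by blast
  qed
  show "\<exists>z1. g z1 \<noteq> 0" using ncg by blast
  show "continuous_on UNIV g" using holg holomorphic_on_imp_continuous_on by blast
  show "continuous_on UNIV \<psi>" using holp holomorphic_on_imp_continuous_on by blast
  show "continuous_on UNIV (deriv g)" using hd holomorphic_on_imp_continuous_on by blast
qed

lemma Mu_cont:
  assumes cu: "continuous_on UNIV u" and cp: "continuous_on UNIV \<psi>"
  shows "continuous_on UNIV (\<lambda>z. cmod (u z) / (1 + cmod z) * exp ((cmod (\<psi> z) ^ 2 - cmod z ^ 2) / 2))"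
    and "continuous_on UNIV (\<lambda>z. cmod (u z) * (1 + cmod (\<psi> z)) / (1 + cmod z) * exp ((cmod (\<psi> z) ^ 2 - cmod z ^ 2) / 2))"
proof -
  have nz1: "1 + cmod z \<noteq> 0" for z :: complex
    by (metis add_pos_nonneg norm_ge_zero not_one_le_zero order_less_irrefl zero_less_one)
  show "continuous_on UNIV (\<lambda>z. cmod (u z) / (1 + cmod z) * exp ((cmod (\<psi> z) ^ 2 - cmod z ^ 2) / 2))"
    using nz1 by (intro continuous_intros cu cp) auto
  show "continuous_on UNIV (\<lambda>z. cmod (u z) * (1 + cmod (\<psi> z)) / (1 + cmod z) * exp ((cmod (\<psi> z) ^ 2 - cmod z ^ 2) / 2))"
    using nz1 by (intro continuous_intros cu cp) auto
qed

lemma pow_bound_inv: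
  fixes M X p :: real
  assumes "0 \<le> M" "M powr p \<le> X" "0 < p"
  shows "M \<le> X powr (1/p)"
proof -
  have "(M powr p) powr (1/p) \<le> X powr (1/p)"
    using assms by (intro powr_mono2) auto
  moreover have "(M powr p) powr (1/p) = M"
    using assms by (simp add: powr_powr)
  ultimately show ?thesis by simp
qed

lemma part1_fwd:
  fixes p :: real
  assumes holg: "g holomorphic_on UNIV" and holp: "\<psi> holomorphic_on UNIV"
    and ncg: "\<not> (\<exists>c. \<forall>z. g z = c)" and ncp: "\<not> (\<exists>c. \<forall>z. \<psi> z = c)" and p: "0 < p"
    and L: "Linf_real (M_fun g \<psi>)"
  shows "Linf_ennreal (B_fun p g \<psi>)"
proof -
  note bf = basic_facts[OF holg holp ncg ncp]
  have cM: "continuous_on UNIV (M_fun g \<psi>)"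
    using Mu_cont(1)[OF bf(6) bf(5)] by (simp add: M_fun_def[abs_def])
  obtain C where ae: "AE z in lebesgue. \<bar>M_fun g \<psi> z\<bar> \<le> C" using L by (auto simp: Linf_real_def)
  have cabs: "continuous_on UNIV (\<lambda>z. \<bar>M_fun g \<psi> z\<bar>)" by (intro continuous_intros cM)
  have allC: "\<bar>M_fun g \<psi> z\<bar> \<le> C" for z by (rule cont_AE_bound_everywhere[OF cabs ae])
  define C' where "C' = max C 1"
  have C'0: "0 < C'" by (simp add: C'_def)
  have M0: "0 \<le> M_fun g \<psi> z" for z by (simp add: M_fun_def)
  have MC: "M_fun g \<psi> z \<le> C'" for z using allC[of z] M0[of z] by (simp add: C'_def)
  have bound: "cmod (deriv g z) * exp ((cmod (\<psi> z)^2 - cmod z^2)/2) \<le> C' * (1 + cmod z)" for z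
  proof -
    have pz: "0 < 1 + cmod z" by (simp add: add_pos_nonneg)
    have "cmod (deriv g z) * exp ((cmod (\<psi> z)^2 - cmod z^2)/2) = M_fun g \<psi> z * (1 + cmod z)"
      using pz by (simp add: M_fun_def)
    also have "\<dots> \<le> C' * (1 + cmod z)" using MC[of z] pz by (simp add: mult_right_mono)
    finally show ?thesis .
  qed
  obtain z1 where z1: "deriv g z1 \<noteq> 0" using bf(2) by blast
  obtain a b where ab: "\<And>z. \<psi> z = a * z + b" and a1: "cmod a \<le> 1"
    using affine_of_growth[OF bf(1) z1 holp C'0 bound] by blast
  have a0: "a \<noteq> 0" using ncp ab by auto
  have Bb: "B_fun p g \<psi> w \<le> ennreal (C' powr p * (pi / ((p/2) * cmod a ^ 2)))" for w
    unfolding B_fun_def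
  proof (rule upper_affine[OF _ a0 ab])
    show "0 < p/2" using p by simp
    show "0 \<le> C' powr p" by simp
    fix z
    have "M_fun g \<psi> z powr p \<le> C' powr p" using MC[of z] M0[of z] p by (intro powr_mono2) auto
    hence "exp (- (p/2) * cmod (\<psi> z - w)^2) * M_fun g \<psi> z powr p \<le> exp (- (p/2) * cmod (\<psi> z - w)^2) * C' powr p"
      by (simp add: mult_left_mono)
    thus "cmod (kw w (\<psi> z)) powr p * cmod (deriv g z) powr p * exp (- (p / 2) * cmod z ^ 2) / (1 + cmod z) powr p
        \<le> C' powr p * exp (- (p/2) * cmod (\<psi> z - w)^2)"
      unfolding integrand_form by (simp add: M_fun_def mult.commute)
  qed
  have meas: "B_fun p g \<psi> \<in> borel_measurable lebesgue"
  proof -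
    have "(\<lambda>w. \<integral>\<^sup>+z. ennreal (cmod (kw w (\<psi> z)) powr p * cmod (deriv g z) powr p
            * exp (- (p / 2) * cmod z ^ 2) / (1 + cmod z) powr p) \<partial>lebesgue) \<in> borel_measurable lebesgue"
      by (rule meas_param_integral[OF cont_integrand(1)[OF bf(6) bf(5) p]])
    thus ?thesis by (simp add: B_fun_def[abs_def])
  qed
  show ?thesis unfolding Linf_ennreal_def using meas Bb by (blast intro: AE_I2)
qed

lemma part1_bwd:
  fixes p :: real
  assumes holg: "g holomorphic_on UNIV" and holp: "\<psi> holomorphic_on UNIV"
    and ncg: "\<not> (\<exists>c. \<forall>z. g z = c)" and ncp: "\<not> (\<exists>c. \<forall>z. \<psi> z = c)" and p: "0 < p"
    and L: "Linf_ennreal (B_fun p g \<psi>)"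
  shows "Linf_real (M_fun g \<psi>)"
proof -
  note bf = basic_facts[OF holg holp ncg ncp]
  have cM: "continuous_on UNIV (M_fun g \<psi>)"
    using Mu_cont(1)[OF bf(6) bf(5)] by (simp add: M_fun_def[abs_def])
  obtain C where ae: "AE w in lebesgue. B_fun p g \<psi> w \<le> ennreal C" using L by (auto simp: Linf_ennreal_def)
  define X where "X = max C 0 / (pi * exp (-p) * (1/2) powr p)"
  have key: "M_fun g \<psi> z0 powr p \<le> X" for z0
  proof -
    obtain w where w: "w \<in> ball (\<psi> z0) 1" and Bw: "B_fun p g \<psi> w \<le> ennreal C"
      using AE_open_point[OF ae, of "ball (\<psi> z0) 1"] by auto
    have wd: "cmod (w - \<psi> z0) < 1" using w by (simp add: dist_norm norm_minus_commute)
    have "ennreal (pi * exp (-p) * (1/2) powr p * M_fun g \<psi> z0 powr p) \<le> B_fun p g \<psi> w"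
      unfolding B_fun_def M_fun_def by (rule bwd_core[OF bf(1) holp p wd])
    also have "\<dots> \<le> ennreal (max C 0)" using Bw by (metis ennreal_max_0 max.cobounded1 ennreal_leI order_trans)
    finally have "pi * exp (-p) * (1/2) powr p * M_fun g \<psi> z0 powr p \<le> max C 0"
      by (subst (asm) ennreal_le_iff) auto
    moreover have "0 < pi * exp (-p) * (1/2) powr p" by simp
    ultimately show ?thesis unfolding X_def by (simp add: pos_le_divide_eq mult.commute)
  qed
  have meas: "M_fun g \<psi> \<in> borel_measurable lebesgue" by (rule cont_meas_leb(1)[OF cM])
  have "\<bar>M_fun g \<psi> z\<bar> \<le> X powr (1/p)" for z
  proof -
    have "0 \<le> M_fun g \<psi> z" by (simp add: M_fun_def)
    thus ?thesis using pow_bound_inv[OF _ key p] by simp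
  qed
  thus ?thesis unfolding Linf_real_def using meas by (blast intro: AE_I2)
qed

lemma one_plus_le_exp: "1 + (x::real) \<le> 2 * exp (x^2 / 4)"
proof -
  have A: "1 + x^2/4 \<le> exp (x^2/4)" by (rule exp_ge_add_one_self)
  have B: "1 + x \<le> 2 * (1 + x^2/4)"
  proof -
    have "0 \<le> (x - 1)^2 + 1" by simp
    thus ?thesis by (simp add: power2_eq_square field_simps)
  qed
  have C: "2 * (1 + x^2/4) \<le> 2 * exp (x^2/4)" using mult_left_mono[OF A, of 2] by simp
  from B C show ?thesis by (rule order_trans)
qed

lemma part2_fwd:
  fixes p :: real
  assumes holg: "g holomorphic_on UNIV" and holp: "\<psi> holomorphic_on UNIV"
    and ncg: "\<not> (\<exists>c. \<forall>z. g z = c)" and ncp: "\<not> (\<exists>c. \<forall>z. \<psi> z = c)" and p: "0 < p"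
    and L: "Linf_real (Mt_fun g \<psi>)"
  shows "Linf_ennreal (Bt_fun p g \<psi>)"
proof -
  note bf = basic_facts[OF holg holp ncg ncp]
  have cM: "continuous_on UNIV (Mt_fun g \<psi>)"
    using Mu_cont(2)[OF bf(4) bf(5)] by (simp add: Mt_fun_def[abs_def])
  obtain C where ae: "AE z in lebesgue. \<bar>Mt_fun g \<psi> z\<bar> \<le> C" using L by (auto simp: Linf_real_def)
  have cabs: "continuous_on UNIV (\<lambda>z. \<bar>Mt_fun g \<psi> z\<bar>)" by (intro continuous_intros cM)
  have allC: "\<bar>Mt_fun g \<psi> z\<bar> \<le> C" for z by (rule cont_AE_bound_everywhere[OF cabs ae])
  define C' where "C' = max C 1"
  have C'0: "0 < C'" by (simp add: C'_def)
  define Mg where "Mg z = cmod (g z) / (1 + cmod z) * exp ((cmod (\<psi> z) ^ 2 - cmod z ^ 2) / 2)" for z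
  have Mg0: "0 \<le> Mg z" for z by (simp add: Mg_def)
  have Mt_eq: "Mt_fun g \<psi> z = (1 + cmod (\<psi> z)) * Mg z" for z
    by (simp add: Mt_fun_def Mg_def)
  have MtC: "Mt_fun g \<psi> z \<le> C'" for z using allC[of z] by (simp add: C'_def)
  have MgC: "Mg z \<le> C'" for z
  proof -
    have "Mg z \<le> (1 + cmod (\<psi> z)) * Mg z" using Mg0[of z] by (simp add: mult_le_cancel_right1)
    thus ?thesis using MtC[of z] Mt_eq[of z] by simp
  qed
  have bound: "cmod (g z) * exp ((cmod (\<psi> z)^2 - cmod z^2)/2) \<le> C' * (1 + cmod z)" for z
  proof -
    have pz: "0 < 1 + cmod z" by (simp add: add_pos_nonneg)
    have "cmod (g z) * exp ((cmod (\<psi> z)^2 - cmod z^2)/2) = Mg z * (1 + cmod z)"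
      using pz by (simp add: Mg_def)
    also have "\<dots> \<le> C' * (1 + cmod z)" using MgC[of z] pz by (simp add: mult_right_mono)
    finally show ?thesis .
  qed
  obtain z1 where z1: "g z1 \<noteq> 0" using bf(3) by blast
  obtain a b where ab: "\<And>z. \<psi> z = a * z + b" and a1: "cmod a \<le> 1"
    using affine_of_growth[OF holg z1 holp C'0 bound] by blast
  have a0: "a \<noteq> 0" using ncp ab by auto
  have Bb: "Bt_fun p g \<psi> w \<le> ennreal ((2 * C') powr p * (pi / ((p/4) * cmod a ^ 2)))" for w
    unfolding Bt_fun_def
  proof (rule upper_affine[OF _ a0 ab])
    show "0 < p/4" using p by simp
    show "0 \<le> (2 * C') powr p" by simp
    fix z
    define D where "D = cmod (\<psi> z - w) ^ 2"
    have s1: "(1 + cmod w) * Mg z \<le> C' * (1 + cmod (\<psi> z - w))"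
    proof -
      have "cmod w \<le> cmod (\<psi> z) + cmod (\<psi> z - w)" by (metis norm_triangle_sub add.commute norm_minus_commute)
      hence "1 + cmod w \<le> (1 + cmod (\<psi> z)) * (1 + cmod (\<psi> z - w))"
        by (simp add: algebra_simps) (smt (verit) mult_nonneg_nonneg norm_ge_zero)
      hence "(1 + cmod w) * Mg z \<le> (1 + cmod (\<psi> z)) * (1 + cmod (\<psi> z - w)) * Mg z"
        using Mg0[of z] by (simp add: mult_right_mono)
      also have "\<dots> = (1 + cmod (\<psi> z - w)) * Mt_fun g \<psi> z" by (simp add: Mt_eq mult_ac)
      also have "\<dots> \<le> (1 + cmod (\<psi> z - w)) * C'" using MtC[of z] by (simp add: mult_left_mono)
      finally show ?thesis by (simp add: mult.commute)
    qed
    have s2: "(1 + cmod w) * Mg z \<le> 2 * C' * exp (D / 4)"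
    proof -
      have "1 + cmod (\<psi> z - w) \<le> 2 * exp (D / 4)" unfolding D_def by (rule one_plus_le_exp)
      hence "C' * (1 + cmod (\<psi> z - w)) \<le> C' * (2 * exp (D / 4))" using C'0 by (simp add: mult_left_mono)
      thus ?thesis using s1 by simp
    qed
    have s3: "((1 + cmod w) * Mg z) powr p \<le> (2 * C') powr p * exp (p * (D / 4))"
    proof -
      have "((1 + cmod w) * Mg z) powr p \<le> (2 * C' * exp (D / 4)) powr p"
        using s2 Mg0[of z] p by (intro powr_mono2) auto
      also have "\<dots> = (2 * C') powr p * exp (p * (D / 4))"
        using C'0 by (simp add: powr_mult exp_powr_real)
      finally show ?thesis .
    qed
    have "cmod (kw w (\<psi> z)) powr p * (1 + cmod w) powr p * cmod (g z) powr p * exp (- (p / 2) * cmod z ^ 2) / (1 + cmod z) powr p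
        = (1 + cmod w) powr p * (cmod (kw w (\<psi> z)) powr p * cmod (g z) powr p * exp (- (p / 2) * cmod z ^ 2) / (1 + cmod z) powr p)"
      by (simp add: mult_ac)
    also have "\<dots> = exp (- (p/2) * D) * ((1 + cmod w) * Mg z) powr p"
    proof -
      have pm: "((1 + cmod w) * Mg z) powr p = (1 + cmod w) powr p * Mg z powr p"
        using Mg0[of z] by (simp add: powr_mult)
      have ig: "cmod (kw w (\<psi> z)) powr p * cmod (g z) powr p * exp (- (p / 2) * cmod z ^ 2) / (1 + cmod z) powr p
          = exp (- (p/2) * D) * Mg z powr p"
        by (subst integrand_form) (simp add: Mg_def D_def)
      show ?thesis unfolding ig pm by (simp only: mult_ac)
    qed
    also have "\<dots> \<le> exp (- (p/2) * D) * ((2 * C') powr p * exp (p * (D / 4)))"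
      using s3 by (simp add: mult_left_mono)
    also have "\<dots> = (2 * C') powr p * exp (- (p/4) * D)"
      by (simp add: mult_ac exp_add[symmetric] field_simps)
    finally show "cmod (kw w (\<psi> z)) powr p * (1 + cmod w) powr p * cmod (g z) powr p * exp (- (p / 2) * cmod z ^ 2) / (1 + cmod z) powr p
        \<le> (2 * C') powr p * exp (- (p/4) * cmod (\<psi> z - w)^2)" by (simp add: D_def)
  qed
  have meas: "Bt_fun p g \<psi> \<in> borel_measurable lebesgue"
  proof -
    have "(\<lambda>w. \<integral>\<^sup>+z. ennreal (cmod (kw w (\<psi> z)) powr p * (1 + cmod w) powr p * cmod (g z) powr p
            * exp (- (p / 2) * cmod z ^ 2) / (1 + cmod z) powr p) \<partial>lebesgue) \<in> borel_measurable lebesgue"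
      by (rule meas_param_integral[OF cont_integrand(2)[OF bf(4) bf(5) p]])
    thus ?thesis by (simp add: Bt_fun_def[abs_def])
  qed
  show ?thesis unfolding Linf_ennreal_def using meas Bb by (blast intro: AE_I2)
qed

lemma aux_half:
  fixes a b :: real
  shows "a \<le> b + 1 \<Longrightarrow> 0 \<le> b \<Longrightarrow> (1 + a) * (1/2) \<le> 1 + b"
  by (simp add: field_simps)

lemma part2_bwd:
  fixes p :: real
  assumes holg: "g holomorphic_on UNIV" and holp: "\<psi> holomorphic_on UNIV"
    and ncg: "\<not> (\<exists>c. \<forall>z. g z = c)" and ncp: "\<not> (\<exists>c. \<forall>z. \<psi> z = c)" and p: "0 < p"
    and L: "Linf_ennreal (Bt_fun p g \<psi>)"
  shows "Linf_real (Mt_fun g \<psi>)"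
proof -
  note bf = basic_facts[OF holg holp ncg ncp]
  have cM: "continuous_on UNIV (Mt_fun g \<psi>)"
    using Mu_cont(2)[OF bf(4) bf(5)] by (simp add: Mt_fun_def[abs_def])
  obtain C where ae: "AE w in lebesgue. Bt_fun p g \<psi> w \<le> ennreal C" using L by (auto simp: Linf_ennreal_def)
  define Mg where "Mg z = cmod (g z) / (1 + cmod z) * exp ((cmod (\<psi> z) ^ 2 - cmod z ^ 2) / 2)" for z
  have Mg0: "0 \<le> Mg z" for z by (simp add: Mg_def)
  have Mt_eq: "Mt_fun g \<psi> z = (1 + cmod (\<psi> z)) * Mg z" for z
    by (simp add: Mt_fun_def Mg_def)
  define k where "k = pi * exp (-p) * (1/2) powr p"
  have k0: "0 < k" by (simp add: k_def)
  define X where "X = max C 0 / (k * (1/2) powr p)"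
  have key: "Mt_fun g \<psi> z0 powr p \<le> X" for z0
  proof -
    obtain w where w: "w \<in> ball (\<psi> z0) 1" and Bw: "Bt_fun p g \<psi> w \<le> ennreal C"
      using AE_open_point[OF ae, of "ball (\<psi> z0) 1"] by auto
    have wd: "cmod (w - \<psi> z0) < 1" using w by (simp add: dist_norm norm_minus_commute)
    define I where "I z = cmod (kw w (\<psi> z)) powr p * cmod (g z) powr p * exp (- (p / 2) * cmod z ^ 2) / (1 + cmod z) powr p" for z
    have cI: "continuous_on UNIV I"
    proof -
      have "continuous_on UNIV (\<lambda>z. (\<lambda>q::complex \<times> complex. cmod (kw (fst q) (\<psi> (snd q))) powr p * cmod (g (snd q)) powr p
            * exp (- (p / 2) * cmod (snd q) ^ 2) / (1 + cmod (snd q)) powr p) (w, z))"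
        by (rule continuous_on_compose2[OF cont_integrand(1)[OF bf(4) bf(5) p]]) (auto intro!: continuous_intros)
      thus ?thesis by (simp add: I_def[abs_def])
    qed
    have mI: "(\<lambda>z. ennreal (I z)) \<in> borel_measurable lebesgue" by (rule cont_meas_leb(2)[OF cI])
    have "Bt_fun p g \<psi> w = (\<integral>\<^sup>+z. ennreal ((1 + cmod w) powr p) * ennreal (I z) \<partial>lebesgue)"
      unfolding Bt_fun_def
      by (intro nn_integral_cong) (simp add: I_def ennreal_mult[symmetric] mult_ac)
    also have "\<dots> = ennreal ((1 + cmod w) powr p) * (\<integral>\<^sup>+z. ennreal (I z) \<partial>lebesgue)"
      by (rule nn_integral_cmult[OF mI])
    finally have Bt_eq: "Bt_fun p g \<psi> w = ennreal ((1 + cmod w) powr p) * (\<integral>\<^sup>+z. ennreal (I z) \<partial>lebesgue)" .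
    have "ennreal (k * Mg z0 powr p) \<le> (\<integral>\<^sup>+z. ennreal (I z) \<partial>lebesgue)"
      unfolding k_def Mg_def I_def by (rule bwd_core[OF holg holp p wd])
    hence "ennreal ((1 + cmod w) powr p) * ennreal (k * Mg z0 powr p) \<le> Bt_fun p g \<psi> w"
      unfolding Bt_eq by (rule mult_left_mono) simp
    also have "\<dots> \<le> ennreal (max C 0)" using Bw by (metis ennreal_max_0 max.cobounded1 ennreal_leI order_trans)
    finally have "ennreal ((1 + cmod w) powr p * (k * Mg z0 powr p)) \<le> ennreal (max C 0)"
      using k0 by (simp add: ennreal_mult)
    hence le1: "(1 + cmod w) powr p * (k * Mg z0 powr p) \<le> max C 0"
      by (subst (asm) ennreal_le_iff) auto
    have "Mt_fun g \<psi> z0 * (1/2) \<le> (1 + cmod w) * Mg z0"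
    proof -
      have "cmod (\<psi> z0) \<le> cmod w + 1"
        using wd norm_triangle_ineq2[of "\<psi> z0" w] by (simp add: norm_minus_commute)
      hence "(1 + cmod (\<psi> z0)) * (1/2) \<le> 1 + cmod w" using norm_ge_zero[of w] by (rule aux_half)
      hence "(1 + cmod (\<psi> z0)) * (1/2) * Mg z0 \<le> (1 + cmod w) * Mg z0" by (rule mult_right_mono) (rule Mg0)
      thus ?thesis by (simp add: Mt_eq mult_ac)
    qed
    hence "(Mt_fun g \<psi> z0 * (1/2)) powr p \<le> ((1 + cmod w) * Mg z0) powr p"
      using p Mg0[of z0] by (intro powr_mono2) (auto simp: Mt_eq)
    moreover have "(Mt_fun g \<psi> z0 * (1/2)) powr p = Mt_fun g \<psi> z0 powr p * (1/2) powr p"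
      by (rule powr_mult)
    moreover have "((1 + cmod w) * Mg z0) powr p = (1 + cmod w) powr p * Mg z0 powr p"
      using Mg0[of z0] by (simp add: powr_mult)
    ultimately have "Mt_fun g \<psi> z0 powr p * (1/2) powr p \<le> (1 + cmod w) powr p * Mg z0 powr p"
      by simp
    hence "k * (Mt_fun g \<psi> z0 powr p * (1/2) powr p) \<le> k * ((1 + cmod w) powr p * Mg z0 powr p)"
      using k0 by (simp add: mult_left_mono)
    also have "\<dots> \<le> max C 0" using le1 by (simp add: mult_ac)
    finally have "Mt_fun g \<psi> z0 powr p * (k * (1/2) powr p) \<le> max C 0" by (simp add: mult_ac)
    moreover have "0 < k * (1/2) powr p" using k0 by simp
    ultimately show ?thesis unfolding X_def by (simp add: pos_le_divide_eq)
  qed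
  have meas: "Mt_fun g \<psi> \<in> borel_measurable lebesgue" by (rule cont_meas_leb(1)[OF cM])
  have "\<bar>Mt_fun g \<psi> z\<bar> \<le> X powr (1/p)" for z
  proof -
    have "0 \<le> Mt_fun g \<psi> z" by (simp add: Mt_eq Mg0 add_nonneg_nonneg)
    thus ?thesis using pow_bound_inv[OF _ key p] by simp
  qed
  thus ?thesis unfolding Linf_real_def using meas by (blast intro: AE_I2)
qed

theorem lemma1:
  fixes g \<psi> :: "complex \<Rightarrow> complex" and p :: real
  assumes "g holomorphic_on UNIV" and "\<psi> holomorphic_on UNIV"
    and "\<not> (\<exists>c. \<forall>z. g z = c)" and "\<not> (\<exists>c. \<forall>z. \<psi> z = c)"
    and "0 < p"
  shows "(Linf_real (M_fun g \<psi>) \<longleftrightarrow> Linf_ennreal (B_fun p g \<psi>))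
    \<and> (Linf_real (Mt_fun g \<psi>) \<longleftrightarrow> Linf_ennreal (Bt_fun p g \<psi>))"
  using part1_fwd[OF assms] part1_bwd[OF assms] part2_fwd[OF assms] part2_bwd[OF assms] by blast

end
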